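(* Every exact nontrivial linked chain of finite support is equivalent to $\mathfrak{u}(\mathbf{r})$ for a unique tuple $\mathbf{r}$.
   Context: Let $k$ be a field; all vector spaces are finite-dimensional over $k$. Let $\mathcal{Z}$ be the quiver with vertex set $\mathbb Z$ and, for each $i\in\mathbb Z$, an arrow $\alpha^i\colon i\to i+1$ and an arrow $\alpha_i\colon i+1\to i$. A representation of $\mathcal Z$ is written $\mathfrak{u}=(U_i,u_i,u^i)_{i\in\mathbb Z}$ with $u^i\colon U_i\to U_{i+1}$ and $u_i\colon U_{i+1}\to U_i$. For $i,j\in\mathbb Z$ put $u^i_i=\mathrm{Id}_{U_i}$, $u^i_j=u^{j-1}\circ\cdots\circ u^i$ if $j>i$, and $u^i_j=u_j\circ u_{j+1}\circ\cdots\circ u_{i-1}$ if $j<i$. The representation $\mathfrak{u}$ is a linked chain if for each $i\in\mathbb Z$: $u_i\circ u^i=0$, $u^i\circ u_i=0$, and $\ker(u_{i-1})\cap\ker(u^i)=0$. It is exact if $\ker(u^i)=\mathrm{Im}(u_i)$ and $\ker(u_i)=\mathrm{Im}(u^i)$ for each $i$; nontrivial if $U_i\neq 0$ for every $i$; and it has finite support if there is a finite $H\subseteq\mathbb Z$ such that for each $i\in\mathbb Z$ there is $j\in H$ with $u^j_i$ surjective. "Equivalent" means isomorphic as representations up to translation, i.e. identifying $\mathfrak{u}$ with $\mathfrak{u}[t]=(U_{t+i},u_{t+i},u^{t+i})_{i\in\mathbb Z}$ for every $t\in\mathbb Z$. For $d\geq 0$ and a tuple $\mathbf{r}=(r_0,\dots,r_d)$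 of nonnegative integers with $r_0,r_d\neq 0$, let $R_i=r_0+\cdots+r_i$, $S_i=r_{i+1}+\cdots+r_d$, and $r=R_d$. Define $\mathfrak{u}(\mathbf{r})=(U_i,u_i,u^i)_{i\in\mathbb Z}$ by $U_i=k^r$ (canonical basis) for all $i$, where $u^i\colon U_i\to U_{i+1}$ is the zero matrix if $i<0$, the identity if $i\geq d$, and $\mathrm{diag}(I_{R_i},0_{S_i})$ for $0\leq i<d$; and $u_i\colon U_{i+1}\to U_i$ is the zero matrix if $i\geq d$, the identity if $i<0$, and $\mathrm{diag}(0_{R_i},I_{S_i})$ for $0\leq i<d$ (here $0_a$, $I_a$ are the $a\times a$ zero and identity matrices). Then $\mathfrak{u}(\mathbf{r})$ is an exact nontrivial linked chain of pure dimension $r$ with minimal support $\{0,\dots,d\}$. *)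

theory Defs
  imports "Jordan_Normal_Form.Matrix"
begin

text \<open>A representation of the quiver Z over a field, with U_i = k^(dim i) (every
finite-dimensional k-space is isomorphic to some k^n, so no generality is lost).
upm i is the matrix of u^i : U_i -> U_(i+1), downm i the matrix of u_i : U_(i+1) -> U_i.\<close>

record 'a zrep =
  dim :: "int \<Rightarrow> nat"
  upm :: "int \<Rightarrow> 'a mat"
  downm :: "int \<Rightarrow> 'a mat"

definition well_formed :: "'a zrep \<Rightarrow> bool" where
  "well_formed u \<longleftrightarrow> (\<forall>i. upm u i \<in> carrier_mat (dim u (i+1)) (dim u i)
                        \<and> downm u i \<in> carrier_mat (dim u i) (dim u (i+1)))"

definition kernel_of :: "'a::field mat \<Rightarrow> 'a vec set" where
  "kernel_of M = {v \<in> carrier_vec (dim_col M). M *\<^sub>v v = 0\<^sub>v (dim_row M)}"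

definition image_of :: "'a::field mat \<Rightarrow> 'a vec set" where
  "image_of M = {M *\<^sub>v w | w. w \<in> carrier_vec (dim_col M)}"

definition linked_chain :: "'a::field zrep \<Rightarrow> bool" where
  "linked_chain u \<longleftrightarrow> well_formed u \<and>
     (\<forall>i. downm u i * upm u i = 0\<^sub>m (dim u i) (dim u i)
        \<and> upm u i * downm u i = 0\<^sub>m (dim u (i+1)) (dim u (i+1))
        \<and> kernel_of (downm u (i-1)) \<inter> kernel_of (upm u i) = {0\<^sub>v (dim u i)})"

definition exact_rep :: "'a::field zrep \<Rightarrow> bool" where
  "exact_rep u \<longleftrightarrow> (\<forall>i. kernel_of (upm u i) = image_of (downm u i)
                        \<and> kernel_of (downm u i) = image_of (upm u i))"

definition nontrivial_rep :: "'a zrep \<Rightarrow> bool" where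
  "nontrivial_rep u \<longleftrightarrow> (\<forall>i. dim u i \<noteq> 0)"

text \<open>upcomp u i m : U_i -> U_(i+m);  downcomp u i m : U_i -> U_(i-m).\<close>
fun upcomp :: "'a::field zrep \<Rightarrow> int \<Rightarrow> nat \<Rightarrow> 'a mat" where
  "upcomp u i 0 = 1\<^sub>m (dim u i)"
| "upcomp u i (Suc m) = upm u (i + int m) * upcomp u i m"

fun downcomp :: "'a::field zrep \<Rightarrow> int \<Rightarrow> nat \<Rightarrow> 'a mat" where
  "downcomp u i 0 = 1\<^sub>m (dim u i)"
| "downcomp u i (Suc m) = downm u (i - int m - 1) * downcomp u i m"

text \<open>path_map u i j is u^i_j : U_i -> U_j.\<close>
definition path_map :: "'a::field zrep \<Rightarrow> int \<Rightarrow> int \<Rightarrow> 'a mat" where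
  "path_map u i j = (if i \<le> j then upcomp u i (nat (j - i)) else downcomp u i (nat (i - j)))"

definition surjective_mat :: "'a::field mat \<Rightarrow> nat \<Rightarrow> bool" where
  "surjective_mat M n \<longleftrightarrow> (\<forall>w \<in> carrier_vec n. w \<in> image_of M)"

definition finite_support :: "'a::field zrep \<Rightarrow> bool" where
  "finite_support u \<longleftrightarrow> (\<exists>H :: int set. finite H \<and>
      (\<forall>i. \<exists>j \<in> H. surjective_mat (path_map u j i) (dim u i)))"

definition shift_rep :: "int \<Rightarrow> 'a zrep \<Rightarrow> 'a zrep" where
  "shift_rep t u = \<lparr>dim = (\<lambda>i. dim u (t+i)), upm = (\<lambda>i. upm u (t+i)),
                    downm = (\<lambda>i. downm u (t+i))\<rparr>"

definition iso_rep :: "'a::field zrep \<Rightarrow> 'a zrep \<Rightarrow> bool" where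
  "iso_rep u v \<longleftrightarrow> (\<exists>P :: int \<Rightarrow> 'a mat.
     \<forall>i. P i \<in> carrier_mat (dim v i) (dim u i) \<and> invertible_mat (P i)
       \<and> P (i+1) * upm u i = upm v i * P i
       \<and> P i * downm u i = downm v i * P (i+1))"

definition equivalent_rep :: "'a::field zrep \<Rightarrow> 'a zrep \<Rightarrow> bool" where
  "equivalent_rep u v \<longleftrightarrow> (\<exists>t. iso_rep u (shift_rep t v))"

text \<open>Tuples r = (r_0,...,r_d), d = length r - 1.\<close>
definition valid_tuple :: "nat list \<Rightarrow> bool" where
  "valid_tuple r \<longleftrightarrow> r \<noteq> [] \<and> hd r \<noteq> 0 \<and> last r \<noteq> 0"

definition partial_R :: "nat list \<Rightarrow> int \<Rightarrow> nat" where
  "partial_R r i = sum_list (take (nat i + 1) r)"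

definition diag_prefix :: "nat \<Rightarrow> nat \<Rightarrow> 'a::field mat" where
  "diag_prefix n a = mat n n (\<lambda>(p, q). if p = q \<and> p < a then 1 else 0)"

definition diag_suffix :: "nat \<Rightarrow> nat \<Rightarrow> 'a::field mat" where
  "diag_suffix n a = mat n n (\<lambda>(p, q). if p = q \<and> a \<le> p then 1 else 0)"

definition u_tuple :: "nat list \<Rightarrow> 'a::field zrep" where
  "u_tuple r = (let n = sum_list r; d = int (length r) - 1 in
     \<lparr>dim = (\<lambda>i. n),
      upm = (\<lambda>i. if i < 0 then 0\<^sub>m n n else if d \<le> i then 1\<^sub>m n
                 else diag_prefix n (partial_R r i)),
      downm = (\<lambda>i. if d \<le> i then 0\<^sub>m n n else if i < 0 then 1\<^sub>m n
                 else diag_suffix n (partial_R r i))\<rparr>)"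

end

theory Submission
  imports Defs "Jordan_Normal_Form.Determinant"
begin
fun lc :: "nat \<Rightarrow> 'a::field vec list \<Rightarrow> 'a list \<Rightarrow> 'a vec" where
  "lc n (v # vs) (a # as) = a \<cdot>\<^sub>v v + lc n vs as"
| "lc n _ _ = 0\<^sub>v n"

lemma lc_carrier[simp]: "set vs \<subseteq> carrier_vec n \<Longrightarrow> lc n vs as \<in> carrier_vec n"
  by (induction n vs as rule: lc.induct) auto

lemma lc_dim[simp]: "set vs \<subseteq> carrier_vec n \<Longrightarrow> dim_vec (lc n vs as) = n"
  using lc_carrier carrier_vecD by blast

lemma lc_Nil[simp]: "lc n [] as = 0\<^sub>v n" by simp

lemma lc_append:
  assumes "length as = length vs" "set vs \<subseteq> carrier_vec n" "set ws \<subseteq> carrier_vec n"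
  shows "lc n (vs @ ws) (as @ bs) = lc n vs as + lc n ws bs"
  using assms
proof (induction as vs rule: list_induct2)
  case Nil then show ?case by simp
next
  case (Cons a as v vs)
  have "lc n (vs @ ws) (as @ bs) = lc n vs as + lc n ws bs" using Cons by auto
  then show ?case using Cons.prems
    by (simp add: assoc_add_vec[symmetric, of "a \<cdot>\<^sub>v v" n])
qed

lemma lc_single[simp]: "v \<in> carrier_vec n \<Longrightarrow> lc n [v] [a] = a \<cdot>\<^sub>v v"
  by simp

lemma lc_mult:
  assumes "M \<in> carrier_mat m n" "set vs \<subseteq> carrier_vec n"
  shows "M *\<^sub>v lc n vs as = lc m (map (\<lambda>v. M *\<^sub>v v) vs) as"
  using assms
proof (induction n vs as rule: lc.induct)
  case (1 n v vs a as)
  then show ?case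
    by (simp add: mult_add_distrib_mat_vec[OF 1(2)] mult_mat_vec[OF 1(2)])
qed auto

lemma lc_index:
  assumes "length as = length vs" "set vs \<subseteq> carrier_vec n" "i < n"
  shows "lc n vs as $ i = (\<Sum>j<length vs. as ! j * vs ! j $ i)"
  using assms
proof (induction as vs rule: list_induct2)
  case Nil then show ?case by simp
next
  case (Cons a as v vs)
  then show ?case using lc_dim[of vs n as] by (auto simp del: sum.lessThan_Suc simp add: sum.lessThan_Suc_shift)
qed

lemma lc_mat_of_cols:
  assumes "length as = length vs" "set vs \<subseteq> carrier_vec n"
  shows "mat_of_cols n vs *\<^sub>v vec_of_list as = lc n vs as"
proof (rule eq_vecI)
  fix i assume "i < dim_vec (lc n vs as)"
  then have i: "i < n" using lc_carrier[OF assms(2), of as] by simp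
  have "(mat_of_cols n vs *\<^sub>v vec_of_list as) $ i = row (mat_of_cols n vs) i \<bullet> vec_of_list as"
    using i by simp
  also have "\<dots> = (\<Sum>j<length vs. vs ! j $ i * as ! j)"
    unfolding scalar_prod_def using i assms(1)
    by (auto simp: mat_of_cols_index vec_of_list_index lessThan_atLeast0 intro!: sum.cong)
  also have "\<dots> = lc n vs as $ i" using lc_index[OF assms i] by (simp add: mult.commute)
  finally show "(mat_of_cols n vs *\<^sub>v vec_of_list as) $ i = lc n vs as $ i" .
qed (use assms lc_dim[OF assms(2), of as] in simp)

lemma lc_cols:
  assumes "M \<in> carrier_mat m k" "length as = k"
  shows "lc m (cols M) as = M *\<^sub>v vec_of_list as"
proof -
  have "M = mat_of_cols m (cols M)" using assms by (metis carrier_matD(1) mat_of_cols_cols)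
  then show ?thesis using lc_mat_of_cols[of as "cols M" m] assms by (metis cols_dim cols_length carrier_matD)
qed

lemma lc_smult:
  assumes "set vs \<subseteq> carrier_vec n"
  shows "c \<cdot>\<^sub>v lc n vs as = lc n vs (map ((*) c) as)"
  using assms
proof (induction n vs as rule: lc.induct)
  case (1 n v vs a as)
  then show ?case by (simp add: smult_add_distrib_vec[of _ n] smult_smult_assoc)
qed auto

lemma lc_add:
  assumes "length as = length vs" "length bs = length vs" "set vs \<subseteq> carrier_vec n"
  shows "lc n vs as + lc n vs bs = lc n vs (map2 (+) as bs)"
  using assms
proof (induction as vs arbitrary: bs rule: list_induct2)
  case Nil then show ?case by simp
next
  case (Cons a as v vs)
  then obtain b bs' where bs: "bs = b # bs'" by (cases bs) auto
  have ih: "lc n vs as + lc n vs bs' = lc n vs (map2 (+) as bs')" using Cons bs by auto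
  have vc: "v \<in> carrier_vec n" "set vs \<subseteq> carrier_vec n" using Cons by auto
  have "lc n (v # vs) (a # as) + lc n (v # vs) bs = (a \<cdot>\<^sub>v v + b \<cdot>\<^sub>v v) + (lc n vs as + lc n vs bs')"
    using vc bs by (intro eq_vecI) auto
  also have "\<dots> = (a + b) \<cdot>\<^sub>v v + lc n vs (map2 (+) as bs')" using ih vc by (simp add: add_smult_distrib_vec)
  finally show ?case using bs by simp
qed

lemma lc_zero:
  assumes "set as \<subseteq> {0}" "set vs \<subseteq> carrier_vec n"
  shows "lc n vs as = 0\<^sub>v n"
  using assms by (induction n vs as rule: lc.induct) auto

lemma neg_smult_vec: "- (v :: 'a::field vec) = (-1) \<cdot>\<^sub>v v"
  by (intro eq_vecI) auto

lemma mat_vec_zero[simp]: "A \<in> carrier_mat m n \<Longrightarrow> A *\<^sub>v 0\<^sub>v n = (0\<^sub>v m :: 'a::field vec)"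
  by (intro eq_vecI) (auto simp: scalar_prod_def)

lemma mat_vec_neg: "A \<in> carrier_mat m n \<Longrightarrow> v \<in> carrier_vec n \<Longrightarrow> A *\<^sub>v (- v) = - (A *\<^sub>v (v :: 'a::field vec))"
  by (simp add: neg_smult_vec mult_mat_vec)

lemma lc_rep0[simp]: "set vs \<subseteq> carrier_vec n \<Longrightarrow> lc n vs (replicate k 0) = 0\<^sub>v n"
  by (rule lc_zero) (auto simp: set_replicate_conv_if)

definition lspan :: "nat \<Rightarrow> 'a::field vec list \<Rightarrow> 'a vec set" where
  "lspan n vs = {lc n vs as | as. length as = length vs}"

definition indep :: "nat \<Rightarrow> 'a::field vec list \<Rightarrow> bool" where
  "indep n vs \<longleftrightarrow> (\<forall>as. length as = length vs \<longrightarrow> lc n vs as = 0\<^sub>v n \<longrightarrow> set as \<subseteq> {0})"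

lemma lspan_carrier: "set vs \<subseteq> carrier_vec n \<Longrightarrow> lspan n vs \<subseteq> carrier_vec n"
  unfolding lspan_def by auto

lemma lspan_Nil[simp]: "lspan n [] = {0\<^sub>v n}"
  unfolding lspan_def by auto

lemma indep_Nil[simp]: "indep n []"
  unfolding indep_def by auto

lemma zero_lspan: "set vs \<subseteq> carrier_vec n \<Longrightarrow> 0\<^sub>v n \<in> lspan n vs"
  unfolding lspan_def
  by (rule CollectI, rule exI[of _ "replicate (length vs) 0"]) auto

lemma lspan_add: "set vs \<subseteq> carrier_vec n \<Longrightarrow> x \<in> lspan n vs \<Longrightarrow> y \<in> lspan n vs \<Longrightarrow> x + y \<in> lspan n vs"
  unfolding lspan_def using lc_add by fastforce

lemma lspan_smult: "set vs \<subseteq> carrier_vec n \<Longrightarrow> x \<in> lspan n vs \<Longrightarrow> c \<cdot>\<^sub>v x \<in> lspan n vs"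
  unfolding lspan_def using lc_smult by fastforce

lemma lspan_neg: "set vs \<subseteq> carrier_vec n \<Longrightarrow> x \<in> lspan n vs \<Longrightarrow> - x \<in> lspan n vs"
  using lspan_smult[of vs n x "-1"] by (simp add: neg_smult_vec)

lemma lspan_lc: "set vs \<subseteq> carrier_vec n \<Longrightarrow> set ws \<subseteq> lspan n vs \<Longrightarrow> lc n ws bs \<in> lspan n vs"
proof (induction n ws bs rule: lc.induct)
  case (1 n w ws b bs)
  then show ?case by (auto intro!: lspan_add lspan_smult)
qed (auto intro: zero_lspan)

lemma lspan_elem:
  assumes "set vs \<subseteq> carrier_vec n" "v \<in> set vs"
  shows "v \<in> lspan n vs"
proof -
  obtain k where k: "k < length vs" "vs ! k = v" using assms(2) by (auto simp: in_set_conv_nth)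
  define as where "as = map (\<lambda>j. if j = k then 1 else (0::'a)) [0..<length vs]"
  have vc: "v \<in> carrier_vec n" using assms by auto
  have "lc n vs as = v"
  proof (rule eq_vecI)
    fix i assume "i < dim_vec v"
    then have i: "i < n" using vc by auto
    have "lc n vs as $ i = (\<Sum>j<length vs. as ! j * vs ! j $ i)"
      by (rule lc_index) (auto simp: as_def assms i)
    also have "\<dots> = (\<Sum>j<length vs. if j = k then vs ! k $ i else 0)"
      by (rule sum.cong) (auto simp: as_def)
    also have "\<dots> = v $ i" using k by simp
    finally show "lc n vs as $ i = v $ i" .
  qed (use vc assms in auto)
  then show ?thesis unfolding lspan_def by (auto simp: as_def)
qed

lemma lspan_mono1:
  assumes "set vs \<subseteq> carrier_vec n" "set ws \<subseteq> carrier_vec n"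
  shows "lspan n vs \<subseteq> lspan n (vs @ ws)"
proof
  fix x assume "x \<in> lspan n vs"
  then obtain a where a: "length a = length vs" "x = lc n vs a" unfolding lspan_def by auto
  have "lc n (vs @ ws) (a @ replicate (length ws) 0) = x"
    using a assms by (simp add: lc_append)
  then show "x \<in> lspan n (vs @ ws)" unfolding lspan_def using a
    by (intro CollectI exI[of _ "a @ replicate (length ws) 0"]) auto
qed

lemma lspan_mono2:
  assumes "set vs \<subseteq> carrier_vec n" "set ws \<subseteq> carrier_vec n"
  shows "lspan n ws \<subseteq> lspan n (vs @ ws)"
proof
  fix x assume "x \<in> lspan n ws"
  then obtain a where a: "length a = length ws" "x = lc n ws a" unfolding lspan_def by auto
  have "lc n (vs @ ws) (replicate (length vs) 0 @ a) = x"
    using a assms by (simp add: lc_append)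
  then show "x \<in> lspan n (vs @ ws)" unfolding lspan_def using a
    by (intro CollectI exI[of _ "replicate (length vs) 0 @ a"]) auto
qed

lemma split_coeffs:
  assumes "length as = length vs + length ws"
  obtains a b where "as = a @ b" "length a = length vs" "length b = length ws"
  using assms by (metis append_take_drop_id length_append length_drop length_take min.absorb2 add_diff_cancel_left' le_add1)

lemma lspan_cols:
  assumes "M \<in> carrier_mat m k"
  shows "image_of M = lspan m (cols M)"
proof
  show "image_of M \<subseteq> lspan m (cols M)"
  proof
    fix x assume "x \<in> image_of M"
    then obtain w where w: "w \<in> carrier_vec k" "x = M *\<^sub>v w" unfolding image_of_def using assms by auto
    have "lc m (cols M) (list_of_vec w) = M *\<^sub>v vec_of_list (list_of_vec w)"
      by (rule lc_cols[OF assms]) (use w in auto)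
    then show "x \<in> lspan m (cols M)" unfolding lspan_def using w assms
      by (intro CollectI exI[of _ "list_of_vec w"]) (auto simp: vec_list)
  qed
  show "lspan m (cols M) \<subseteq> image_of M"
  proof
    fix x assume "x \<in> lspan m (cols M)"
    then obtain a where a: "length a = k" "x = lc m (cols M) a" unfolding lspan_def using assms by auto
    then have "x = M *\<^sub>v vec_of_list a" using lc_cols[OF assms] by auto
    then show "x \<in> image_of M" unfolding image_of_def using a assms
      by (intro CollectI exI[of _ "vec_of_list a"]) (auto intro: carrier_vecI)
  qed
qed

lemma lc_units:
  assumes "v \<in> carrier_vec m"
  shows "lc m (map (unit_vec m) [0..<m]) (list_of_vec v) = v"
proof (rule eq_vecI)
  fix i assume "i < dim_vec v"
  then have i: "i < m" using assms by auto
  have uc: "set (map (unit_vec m) [0..<m]) \<subseteq> carrier_vec m" by auto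
  have "lc m (map (unit_vec m) [0..<m]) (list_of_vec v) $ i = (\<Sum>j<m. list_of_vec v ! j * map (unit_vec m) [0..<m] ! j $ i)"
    using lc_index[OF _ uc i, of "list_of_vec v"] assms by auto
  also have "\<dots> = (\<Sum>j<m. if j = i then v $ i else 0)"
    by (rule sum.cong) (use i assms in auto)
  also have "\<dots> = v $ i" using i by simp
  finally show "lc m (map (unit_vec m) [0..<m]) (list_of_vec v) $ i = v $ i" .
next
  have "dim_vec (lc m (map (unit_vec m) [0..<m]) (list_of_vec v)) = m" by (rule lc_dim) auto
  then show "dim_vec (lc m (map (unit_vec m) [0..<m]) (list_of_vec v)) = dim_vec v" using assms by auto
qed

lemma lspan_all:
  assumes "set vs \<subseteq> carrier_vec m" "\<And>l. l < m \<Longrightarrow> unit_vec m l \<in> lspan m vs"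
  shows "lspan m vs = carrier_vec m"
proof
  show "lspan m vs \<subseteq> carrier_vec m" using lspan_carrier[OF assms(1)] .
  show "carrier_vec m \<subseteq> lspan m vs"
  proof
    fix v :: "'a vec" assume v: "v \<in> carrier_vec m"
    have "lc m (map (unit_vec m) [0..<m]) (list_of_vec v) \<in> lspan m vs"
      by (rule lspan_lc) (use assms in auto)
    then show "v \<in> lspan m vs" using lc_units[OF v] by simp
  qed
qed

definition cmpl :: "nat \<Rightarrow> 'a::field vec set \<Rightarrow> 'a vec set \<Rightarrow> 'a vec list \<Rightarrow> bool" where
  "cmpl m P Q Cs \<longleftrightarrow> set Cs \<subseteq> carrier_vec m \<and>
     (\<forall>v\<in>carrier_vec m. \<exists>p\<in>P. \<exists>q\<in>Q. \<exists>c. length c = length Cs \<and> v = p + q + lc m Cs c) \<and>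
     (\<forall>p\<in>P. \<forall>q\<in>Q. \<forall>c. length c = length Cs \<longrightarrow> p + q + lc m Cs c = 0\<^sub>v m \<longrightarrow> set c \<subseteq> {0})"

lemma cmpl_sym:
  assumes "cmpl m P Q Cs" "P \<subseteq> carrier_vec m" "Q \<subseteq> carrier_vec m"
  shows "cmpl m Q P Cs"
proof -
  have comm: "p + q = q + p" if "p \<in> P" "q \<in> Q" for p q
    using that assms(2,3) by (metis comm_add_vec subsetD)
  from assms(1) have 1: "set Cs \<subseteq> carrier_vec m"
    and 2: "\<forall>v\<in>carrier_vec m. \<exists>p\<in>P. \<exists>q\<in>Q. \<exists>c. length c = length Cs \<and> v = p + q + lc m Cs c"
    and 3: "\<forall>p\<in>P. \<forall>q\<in>Q. \<forall>c. length c = length Cs \<longrightarrow> p + q + lc m Cs c = 0\<^sub>v m \<longrightarrow> set c \<subseteq> {0}"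
    unfolding cmpl_def by auto
  have h2: "\<forall>v\<in>carrier_vec m. \<exists>q\<in>Q. \<exists>p\<in>P. \<exists>c. length c = length Cs \<and> v = q + p + lc m Cs c"
  proof
    fix v :: "'a vec" assume "v \<in> carrier_vec m"
    then obtain p q c where "p \<in> P" "q \<in> Q" "length c = length Cs" "v = p + q + lc m Cs c" using 2 by blast
    then show "\<exists>q\<in>Q. \<exists>p\<in>P. \<exists>c. length c = length Cs \<and> v = q + p + lc m Cs c" using comm by metis
  qed
  have h3: "\<forall>q\<in>Q. \<forall>p\<in>P. \<forall>c. length c = length Cs \<longrightarrow> q + p + lc m Cs c = 0\<^sub>v m \<longrightarrow> set c \<subseteq> {0}"
    using 3 comm by metis
  show ?thesis unfolding cmpl_def using 1 h2 h3 by blast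
qed

fun ext :: "nat \<Rightarrow> 'a::field vec list \<Rightarrow> nat \<Rightarrow> 'a vec list" where
  "ext m X 0 = []"
| "ext m X (Suc k) = (let C = ext m X k in
     if unit_vec m k \<in> lspan m (X @ C) then C else C @ [unit_vec m k])"

lemma ext_props:
  assumes X: "set X \<subseteq> carrier_vec m"
  shows "set (ext m X k) \<subseteq> carrier_vec m \<and>
    (\<forall>a c. length a = length X \<longrightarrow> length c = length (ext m X k) \<longrightarrow>
        lc m X a + lc m (ext m X k) c = 0\<^sub>v m \<longrightarrow> set c \<subseteq> {0}) \<and>
    (\<forall>l<k. unit_vec m l \<in> lspan m (X @ ext m X k))"
proof (induction k)
  case 0
  then show ?case using X by (auto simp: lc_zero)
next
  case (Suc k)
  define C where "C = ext m X k"
  define e :: "'a vec" where "e = unit_vec m k"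
  have Cc: "set C \<subseteq> carrier_vec m" and dis: "\<And>a c. length a = length X \<Longrightarrow> length c = length C \<Longrightarrow>
        lc m X a + lc m C c = 0\<^sub>v m \<Longrightarrow> set c \<subseteq> {0}"
    and sp: "\<And>l. l < k \<Longrightarrow> unit_vec m l \<in> lspan m (X @ C)"
    using Suc.IH unfolding C_def by auto
  have XCc: "set (X @ C) \<subseteq> carrier_vec m" using X Cc by auto
  have ec: "e \<in> carrier_vec m" unfolding e_def by simp
  show ?case
  proof (cases "e \<in> lspan m (X @ C)")
    case True
    then have "ext m X (Suc k) = C" by (simp add: C_def e_def Let_def)
    moreover have "\<forall>l<Suc k. unit_vec m l \<in> lspan m (X @ C)"
      using sp True unfolding e_def by (metis less_SucE)
    ultimately show ?thesis using Cc dis by (simp only:) blast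
  next
    case False
    then have eq: "ext m X (Suc k) = C @ [e]" by (simp add: C_def e_def Let_def)
    have Cec: "set (C @ [e]) \<subseteq> carrier_vec m" using Cc ec by auto
    have dis2: "set c' \<subseteq> {0}" if a: "length a = length X" and c': "length c' = length (C @ [e])"
      and z: "lc m X a + lc m (C @ [e]) c' = 0\<^sub>v m" for a c'
    proof -
      obtain c t where ct: "c' = c @ [t]" "length c = length C"
      proof (cases c' rule: rev_cases)
        case Nil then show ?thesis using c' by simp
      next
        case (snoc c t) then show ?thesis using c' that by simp
      qed
      have lcC: "lc m (C @ [e]) c' = lc m C c + t \<cdot>\<^sub>v e"
        using ct Cc ec by (simp add: lc_append)
      define w where "w = lc m (X @ C) (a @ c)"
      have w: "w = lc m X a + lc m C c" unfolding w_def using a ct X Cc by (simp add: lc_append)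
      have wc: "w \<in> carrier_vec m" using w X Cc by simp
      have z2: "w + t \<cdot>\<^sub>v e = 0\<^sub>v m"
      proof -
        have "lc m X a + lc m (C @ [e]) c' = w + t \<cdot>\<^sub>v e"
          unfolding lcC w using assoc_add_vec[of "lc m X a" m "lc m C c" "t \<cdot>\<^sub>v e"] X Cc ec by simp
        then show ?thesis using z by simp
      qed
      have t0: "t = 0"
      proof (rule ccontr)
        assume t: "t \<noteq> 0"
        have "e = (- 1 / t) \<cdot>\<^sub>v w"
        proof (rule eq_vecI)
          fix i assume "i < dim_vec ((- 1 / t) \<cdot>\<^sub>v w)"
          then have i: "i < m" using wc by auto
          have "(w + t \<cdot>\<^sub>v e) $ i = 0" using z2 i by simp
          then have "w $ i + t * e $ i = 0" using i wc ec by simp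
          then have "e $ i = - w $ i / t" using t by (simp add: field_simps add_eq_0_iff)
          then show "e $ i = ((- 1 / t) \<cdot>\<^sub>v w) $ i" using i wc by simp
        qed (use wc ec in auto)
        also have "\<dots> \<in> lspan m (X @ C)"
          using lspan_smult[OF XCc] w_def a ct unfolding lspan_def by fastforce
        finally show False using False by simp
      qed
      have "0 \<cdot>\<^sub>v e = 0\<^sub>v m" using ec by (intro eq_vecI) auto
      then have "lc m X a + lc m C c = 0\<^sub>v m" using z2 w t0 wc by simp
      then have "set c \<subseteq> {0}" using dis a ct by auto
      then show ?thesis using ct t0 by auto
    qed
    have sp2: "unit_vec m l \<in> lspan m (X @ C @ [e])" if "l < Suc k" for l
    proof (cases "l < k")
      case True
      then show ?thesis using sp lspan_mono1[OF XCc, of "[e]"] ec by auto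
    next
      case False
      then have "l = k" using that by simp
      have "e \<in> lspan m (X @ C @ [e])" using lspan_elem[of "X @ C @ [e]" m e] XCc ec by simp
      then show ?thesis unfolding \<open>l = k\<close> e_def .
    qed
    show ?thesis unfolding eq
    proof (intro conjI allI impI)
      show "set (C @ [e]) \<subseteq> carrier_vec m" by (rule Cec)
    next
      fix a c assume "length a = length X" "length c = length (C @ [e])" "lc m X a + lc m (C @ [e]) c = 0\<^sub>v m"
      then show "set c \<subseteq> {0}" by (rule dis2)
    next
      fix l assume "l < Suc k" then show "unit_vec m l \<in> lspan m (X @ C @ [e])" by (rule sp2)
    qed
  qed
qed

lemma ext_empty:
  assumes "\<And>l. l < k \<Longrightarrow> unit_vec m l \<in> lspan m X"
  shows "ext m X k = []"
  using assms
proof (induction k)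
  case (Suc k)
  then have "ext m X k = []" by simp
  moreover have "unit_vec m k \<in> lspan m (X @ [])" using Suc.prems by simp
  ultimately show ?case by (simp add: Let_def)
qed simp

lemma ext_cmpl:
  assumes M1: "M1 \<in> carrier_mat m k1" and M2: "M2 \<in> carrier_mat m k2"
  shows "cmpl m (image_of M1) (image_of M2) (ext m (cols M1 @ cols M2) m)"
proof -
  define X where "X = cols M1 @ cols M2"
  define C where "C = ext m X m"
  have Xc: "set X \<subseteq> carrier_vec m" unfolding X_def using M1 M2 cols_dim[of M1] cols_dim[of M2] by auto
  note props = ext_props[OF Xc, of m]
  have Cc: "set C \<subseteq> carrier_vec m" using props C_def by auto
  have all: "lspan m (X @ C) = carrier_vec m"
    by (rule lspan_all) (use Xc Cc props C_def in auto)
  have c1: "set (cols M1) \<subseteq> carrier_vec m" "set (cols M2) \<subseteq> carrier_vec m" using M1 M2 cols_dim[of M1] cols_dim[of M2] by auto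
  have cover: "\<exists>p\<in>image_of M1. \<exists>q\<in>image_of M2. \<exists>c. length c = length C \<and> v = p + q + lc m C c"
    if v: "v \<in> carrier_vec m" for v
  proof -
    from v all obtain as where as: "length as = length (X @ C)" "v = lc m (X @ C) as" unfolding lspan_def by auto
    obtain a c where ac: "as = a @ c" "length a = length X" "length c = length C" using split_coeffs[of as X C] as(1) by auto
    obtain a1 a2 where a12: "a = a1 @ a2" "length a1 = length (cols M1)" "length a2 = length (cols M2)"
      using split_coeffs[of a "cols M1" "cols M2"] ac(2) unfolding X_def by auto
    have "v = lc m (cols M1) a1 + lc m (cols M2) a2 + lc m C c"
      using as ac a12 Xc Cc c1 unfolding X_def
      by (simp add: lc_append assoc_add_vec[of _ m])
    moreover have "lc m (cols M1) a1 \<in> image_of M1" using lspan_cols[OF M1] a12 unfolding lspan_def by auto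
    moreover have "lc m (cols M2) a2 \<in> image_of M2" using lspan_cols[OF M2] a12 unfolding lspan_def by auto
    ultimately show ?thesis using ac by blast
  qed
  have dis: "set c \<subseteq> {0}" if p: "p \<in> image_of M1" and q: "q \<in> image_of M2" and c: "length c = length C"
    and z: "p + q + lc m C c = 0\<^sub>v m" for p q c
  proof -
    obtain a1 where a1: "length a1 = length (cols M1)" "p = lc m (cols M1) a1" using p lspan_cols[OF M1] unfolding lspan_def by auto
    obtain a2 where a2: "length a2 = length (cols M2)" "q = lc m (cols M2) a2" using q lspan_cols[OF M2] unfolding lspan_def by auto
    have "lc m X (a1 @ a2) = p + q" unfolding X_def using a1 a2 c1 by (simp add: lc_append)
    then have L: "lc m X (a1 @ a2) + lc m C c = 0\<^sub>v m" using z by simp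
    have la: "length (a1 @ a2) = length X" using a1 a2 X_def by simp
    from props have D: "\<forall>a c. length a = length X \<longrightarrow> length c = length C \<longrightarrow> lc m X a + lc m C c = 0\<^sub>v m \<longrightarrow> set c \<subseteq> {0}"
      unfolding C_def by blast
    show ?thesis using D la L c by blast
  qed
  show ?thesis unfolding cmpl_def using Cc cover dis unfolding C_def X_def by blast
qed

lemma push:
  assumes T: "T \<in> carrier_mat m' m" and Lc: "set Lp \<subseteq> carrier_vec m" and ind: "indep m Lp"
    and sp: "lspan m Lp = P" and Qk: "Q = kernel_of T" and PQ: "P \<inter> Q \<subseteq> {0\<^sub>v m}" and cm: "cmpl m P Q Cs"
  shows "indep m' (map (\<lambda>v. T *\<^sub>v v) (Lp @ Cs))" (is ?I)
    and "lspan m' (map (\<lambda>v. T *\<^sub>v v) (Lp @ Cs)) = image_of T" (is ?S)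
proof -
  have Cc: "set Cs \<subseteq> carrier_vec m"
    and cov: "\<And>v. v \<in> carrier_vec m \<Longrightarrow> \<exists>p\<in>P. \<exists>q\<in>Q. \<exists>c. length c = length Cs \<and> v = p + q + lc m Cs c"
    and dis: "\<And>p q c. p \<in> P \<Longrightarrow> q \<in> Q \<Longrightarrow> length c = length Cs \<Longrightarrow> p + q + lc m Cs c = 0\<^sub>v m \<Longrightarrow> set c \<subseteq> {0}"
    using cm unfolding cmpl_def by blast+
  have LCc: "set (Lp @ Cs) \<subseteq> carrier_vec m" using Lc Cc by auto
  have dT: "dim_row T = m'" "dim_col T = m" using T by auto
  have lcT: "lc m' (map (\<lambda>v. T *\<^sub>v v) (Lp @ Cs)) as = T *\<^sub>v lc m (Lp @ Cs) as" for as
    using lc_mult[OF T LCc] by simp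
  show ?I unfolding indep_def
  proof (intro allI impI)
    fix as assume len: "length as = length (map (\<lambda>v. T *\<^sub>v v) (Lp @ Cs))"
      and z: "lc m' (map (\<lambda>v. T *\<^sub>v v) (Lp @ Cs)) as = 0\<^sub>v m'"
    obtain a c where ac: "as = a @ c" "length a = length Lp" "length c = length Cs"
      using split_coeffs[of as Lp Cs] len by auto
    define x where "x = lc m Lp a"
    define y where "y = lc m Cs c"
    have xc: "x \<in> carrier_vec m" "y \<in> carrier_vec m" using Lc Cc x_def y_def by auto
    have xy: "lc m (Lp @ Cs) as = x + y" using ac Lc Cc x_def y_def by (simp add: lc_append)
    have Txy: "T *\<^sub>v (x + y) = 0\<^sub>v m'" using z lcT xy by simp
    have xP: "x \<in> P" using sp ac(2) x_def unfolding lspan_def by auto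
    have "T *\<^sub>v (- (x + y)) = - (T *\<^sub>v (x + y))" using mat_vec_neg[OF T, of "x+y"] xc by simp
    then have nQ: "- (x + y) \<in> Q" unfolding Qk kernel_of_def using Txy xc dT by auto
    have "x + (- (x + y)) + y = 0\<^sub>v m" using xc by (intro eq_vecI) auto
    then have c0: "set c \<subseteq> {0}" using dis[OF xP nQ ac(3)] y_def by simp
    then have y0: "y = 0\<^sub>v m" using y_def lc_zero Cc by auto
    have "x \<in> Q" unfolding Qk kernel_of_def using Txy y0 xc dT by auto
    then have "x = 0\<^sub>v m" using PQ xP by auto
    then have "set a \<subseteq> {0}" using ind ac(2) x_def unfolding indep_def by auto
    then show "set as \<subseteq> {0}" using ac c0 by auto
  qed
  show ?S
  proof
    show "lspan m' (map (\<lambda>v. T *\<^sub>v v) (Lp @ Cs)) \<subseteq> image_of T"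
    proof
      fix w assume "w \<in> lspan m' (map (\<lambda>v. T *\<^sub>v v) (Lp @ Cs))"
      then obtain as where "w = lc m' (map (\<lambda>v. T *\<^sub>v v) (Lp @ Cs)) as" unfolding lspan_def by auto
      then have "w = T *\<^sub>v lc m (Lp @ Cs) as" using lcT by simp
      then show "w \<in> image_of T" unfolding image_of_def using dT LCc by auto
    qed
    show "image_of T \<subseteq> lspan m' (map (\<lambda>v. T *\<^sub>v v) (Lp @ Cs))"
    proof
      fix w assume "w \<in> image_of T"
      then obtain v where v: "v \<in> carrier_vec m" "w = T *\<^sub>v v" unfolding image_of_def using dT by auto
      from cov[OF v(1)] obtain p q c where pqc: "p \<in> P" "q \<in> Q" "length c = length Cs" "v = p + q + lc m Cs c"
        by blast
      from pqc(1) sp obtain a where a: "length a = length Lp" "p = lc m Lp a" unfolding lspan_def by auto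
      have qc: "q \<in> carrier_vec m" "T *\<^sub>v q = 0\<^sub>v m'" using pqc(2) Qk dT unfolding kernel_of_def by auto
      have pc: "p \<in> carrier_vec m" using a Lc by simp
      have yc: "lc m Cs c \<in> carrier_vec m" using Cc by simp
      have "T *\<^sub>v v = T *\<^sub>v p + T *\<^sub>v q + T *\<^sub>v lc m Cs c"
        using pqc(4) pc qc yc T by (simp add: mult_add_distrib_mat_vec[OF T])
      also have "\<dots> = T *\<^sub>v p + T *\<^sub>v lc m Cs c" using qc pc yc T by simp
      also have "\<dots> = T *\<^sub>v (p + lc m Cs c)" using pc yc by (simp add: mult_add_distrib_mat_vec[OF T])
      also have "p + lc m Cs c = lc m (Lp @ Cs) (a @ c)" using a Lc Cc by (simp add: lc_append)
      finally have "w = lc m' (map (\<lambda>v. T *\<^sub>v v) (Lp @ Cs)) (a @ c)" using v lcT by simp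
      then show "w \<in> lspan m' (map (\<lambda>v. T *\<^sub>v v) (Lp @ Cs))" unfolding lspan_def using a pqc(3)
        by (intro CollectI exI[of _ "a @ c"]) auto
    qed
  qed
qed

lemma vertex:
  assumes La: "set La \<subseteq> carrier_vec m" "indep m La" "lspan m La = P"
    and Lb: "set Lb \<subseteq> carrier_vec m" "indep m Lb" "lspan m Lb = Q"
    and PQ: "P \<inter> Q \<subseteq> {0\<^sub>v m}" and cm: "cmpl m P Q Cs"
  shows "indep m (La @ Cs @ Lb)" "lspan m (La @ Cs @ Lb) = carrier_vec m"
proof -
  have Cc: "set Cs \<subseteq> carrier_vec m"
    and cov: "\<And>v. v \<in> carrier_vec m \<Longrightarrow> \<exists>p\<in>P. \<exists>q\<in>Q. \<exists>c. length c = length Cs \<and> v = p + q + lc m Cs c"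
    and dis: "\<And>p q c. p \<in> P \<Longrightarrow> q \<in> Q \<Longrightarrow> length c = length Cs \<Longrightarrow> p + q + lc m Cs c = 0\<^sub>v m \<Longrightarrow> set c \<subseteq> {0}"
    using cm unfolding cmpl_def by blast+
  have all: "set (La @ Cs @ Lb) \<subseteq> carrier_vec m" using La Lb Cc by auto
  show "indep m (La @ Cs @ Lb)" unfolding indep_def
  proof (intro allI impI)
    fix as assume len: "length as = length (La @ Cs @ Lb)" and z: "lc m (La @ Cs @ Lb) as = 0\<^sub>v m"
    obtain a cb where acb: "as = a @ cb" "length a = length La" "length cb = length (Cs @ Lb)"
      using split_coeffs[of as La "Cs @ Lb"] len by auto
    obtain c b where cb: "cb = c @ b" "length c = length Cs" "length b = length Lb"
      using split_coeffs[of cb Cs Lb] acb(3) by auto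
    define x where "x = lc m La a"
    define y where "y = lc m Cs c"
    define w where "w = lc m Lb b"
    have c: "x \<in> carrier_vec m" "y \<in> carrier_vec m" "w \<in> carrier_vec m" using La Lb Cc x_def y_def w_def by auto
    have "lc m (La @ Cs @ Lb) as = x + (y + w)" using acb cb La Lb Cc x_def y_def w_def by (simp add: lc_append)
    then have z2: "x + (y + w) = 0\<^sub>v m" using z by simp
    have xP: "x \<in> P" using La(3) acb(2) x_def unfolding lspan_def by auto
    have wQ: "w \<in> Q" using Lb(3) cb(3) w_def unfolding lspan_def by auto
    have "x + w + y = 0\<^sub>v m" using z2 c
      by (metis assoc_add_vec comm_add_vec)
    then have c0: "set c \<subseteq> {0}" using dis[OF xP wQ cb(2)] y_def by simp
    then have y0: "y = 0\<^sub>v m" using y_def lc_zero Cc by auto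
    then have xw: "x + w = 0\<^sub>v m" using z2 c by simp
    have "x = - w"
    proof (rule eq_vecI)
      fix i assume "i < dim_vec (- w)" then have i: "i < m" using c by simp
      have "(x + w) $ i = 0" using xw i by simp
      then show "x $ i = (- w) $ i" using i c by (simp add: eq_neg_iff_add_eq_0)
    qed (use c in simp)
    then have "x \<in> Q" using lspan_neg[OF Lb(1)] wQ Lb(3) by auto
    then have x0: "x = 0\<^sub>v m" using PQ xP by auto
    then have w0: "w = 0\<^sub>v m" using xw c by simp
    have "set a \<subseteq> {0}" using La(2) acb(2) x_def x0 unfolding indep_def by auto
    moreover have "set b \<subseteq> {0}" using Lb(2) cb(3) w_def w0 unfolding indep_def by auto
    ultimately show "set as \<subseteq> {0}" using acb cb c0 by auto
  qed
  show "lspan m (La @ Cs @ Lb) = carrier_vec m"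
  proof
    show "lspan m (La @ Cs @ Lb) \<subseteq> carrier_vec m" using lspan_carrier[OF all] .
    show "carrier_vec m \<subseteq> lspan m (La @ Cs @ Lb)"
    proof
      fix v :: "'a vec" assume v: "v \<in> carrier_vec m"
      from cov[OF v] obtain p q c where pqc: "p \<in> P" "q \<in> Q" "length c = length Cs" "v = p + q + lc m Cs c"
        by blast
      from pqc(1) La(3) obtain a where a: "length a = length La" "p = lc m La a" unfolding lspan_def by auto
      from pqc(2) Lb(3) obtain b where b: "length b = length Lb" "q = lc m Lb b" unfolding lspan_def by auto
      have c: "p \<in> carrier_vec m" "q \<in> carrier_vec m" "lc m Cs c \<in> carrier_vec m" using a b La Lb Cc by auto
      have "lc m (La @ Cs @ Lb) (a @ c @ b) = p + (lc m Cs c + q)"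
        using a b pqc(3) La Lb Cc by (simp add: lc_append)
      also have "\<dots> = v" using pqc(4) c by (metis assoc_add_vec comm_add_vec)
      finally show "v \<in> lspan m (La @ Cs @ Lb)" unfolding lspan_def using a b pqc(3)
        by (intro CollectI exI[of _ "a @ c @ b"]) auto
    qed
  qed
qed

lemma inj_le:
  assumes Q: "(Q :: 'a::field mat) \<in> carrier_mat m k"
    and inj: "\<And>x. x \<in> carrier_vec k \<Longrightarrow> Q *\<^sub>v x = 0\<^sub>v m \<Longrightarrow> x = 0\<^sub>v k"
  shows "k \<le> m"
proof (rule ccontr)
  assume "\<not> k \<le> m" then have km: "m < k" by simp
  define Q' where "Q' = mat k k (\<lambda>(a,b). if a < m then Q $$ (a,b) else (0::'a))"
  have Q'c: "Q' \<in> carrier_mat k k" unfolding Q'_def by simp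
  have "det Q' \<noteq> 0"
  proof
    assume "det Q' = 0"
    then obtain v where v: "v \<in> carrier_vec k" "v \<noteq> 0\<^sub>v k" "Q' *\<^sub>v v = 0\<^sub>v k"
      using det_0_iff_vec_prod_zero_field[OF Q'c] by auto
    have "Q *\<^sub>v v = 0\<^sub>v m"
    proof (rule eq_vecI)
      fix i assume "i < dim_vec (0\<^sub>v m :: 'a vec)" then have i: "i < m" by simp
      have "(Q' *\<^sub>v v) $ i = 0\<^sub>v k $ i" by (simp only: v(3))
      then have "(Q' *\<^sub>v v) $ i = 0" using i km by simp
      moreover have "(Q' *\<^sub>v v) $ i = (Q *\<^sub>v v) $ i" using i km Q v(1) unfolding Q'_def
        by (simp add: scalar_prod_def row_def)
      ultimately show "(Q *\<^sub>v v) $ i = 0\<^sub>v m $ i" using i by simp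
    qed (use Q in simp)
    then show False using inj v by auto
  qed
  moreover have "det Q' = 0"
  proof -
    have k1: "k - 1 < k" "m \<le> k - 1" using km by auto
    have "transpose_mat Q' *\<^sub>v unit_vec k (k - 1) = 0\<^sub>v k"
    proof (rule eq_vecI)
      fix i assume "i < dim_vec (0\<^sub>v k :: 'a vec)" then have i: "i < k" by simp
      have "(transpose_mat Q' *\<^sub>v unit_vec k (k - 1)) $ i = row (transpose_mat Q') i \<bullet> unit_vec k (k - 1)"
        using i Q'c by simp
      also have "\<dots> = row (transpose_mat Q') i $ (k - 1)" using k1 by simp
      also have "\<dots> = 0" using i k1 Q'c unfolding Q'_def by simp
      finally show "(transpose_mat Q' *\<^sub>v unit_vec k (k - 1)) $ i = 0\<^sub>v k $ i" using i by simp
    qed (use Q'c in simp)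
    then have "det (transpose_mat Q') = 0"
      using det_0_iff_vec_prod_zero_field[of "transpose_mat Q'" k] Q'c k1 unit_vec_nonzero[of "k-1" k]
      by (metis transpose_carrier_mat unit_vec_carrier)
    then show ?thesis using det_transpose[OF Q'c] by simp
  qed
  ultimately show False by simp
qed

lemma final_inv:
  assumes Lc: "set L \<subseteq> carrier_vec m" and ind: "indep m L" and sp: "lspan m L = carrier_vec m"
  shows "length L = m" "invertible_mat (mat_of_cols m L)"
proof -
  define k where "k = length L"
  define Q where "Q = mat_of_cols m L"
  have Qc: "Q \<in> carrier_mat m k" unfolding Q_def k_def by simp
  have Qx: "Q *\<^sub>v x = lc m L (list_of_vec x)" if "x \<in> carrier_vec k" for x
    using lc_mat_of_cols[of "list_of_vec x" L m] Lc that unfolding Q_def k_def by (simp add: vec_list)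
  have injQ: "x = 0\<^sub>v k" if x: "x \<in> carrier_vec k" and z: "Q *\<^sub>v x = 0\<^sub>v m" for x
  proof -
    have "set (list_of_vec x) \<subseteq> {0}" using ind Qx[OF x] z x unfolding indep_def k_def by auto
    then show ?thesis using x
      by (intro eq_vecI) (auto simp: set_list_of_vec vec_set_def)
  qed
  have km: "k \<le> m" by (rule inj_le[OF Qc injQ])
  have pre: "\<exists>x. x \<in> carrier_vec k \<and> Q *\<^sub>v x = unit_vec m l" if "l < m" for l
  proof -
    have "unit_vec m l \<in> lspan m L" using sp by simp
    then obtain as where as: "length as = length L" "unit_vec m l = lc m L as" unfolding lspan_def by auto
    then have "Q *\<^sub>v vec_of_list as = unit_vec m l" using lc_mat_of_cols[OF as(1) Lc] unfolding Q_def by simp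
    then show ?thesis using as k_def by (intro exI[of _ "vec_of_list as"]) (auto intro: carrier_vecI)
  qed
  define p where "p l = (SOME x. x \<in> carrier_vec k \<and> Q *\<^sub>v x = unit_vec m l)" for l
  have p: "p l \<in> carrier_vec k" "Q *\<^sub>v p l = unit_vec m l" if "l < m" for l
    using someI_ex[OF pre[OF that]] unfolding p_def by auto
  define R where "R = mat_of_cols k (map p [0..<m])"
  have Rc: "R \<in> carrier_mat k m" unfolding R_def using mat_of_cols_carrier(1)[of k "map p [0..<m]"] by simp
  have QR: "Q * R = 1\<^sub>m m"
  proof (rule mat_col_eqI)
    fix l assume "l < dim_col (1\<^sub>m m :: 'a mat)" then have l: "l < m" by simp
    have "col (Q * R) l = Q *\<^sub>v col R l" using col_mult2[OF Qc Rc l] .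
    also have "col R l = p l" unfolding R_def using l p by simp
    finally show "col (Q * R) l = col (1\<^sub>m m) l" using p l by simp
  qed (use Qc Rc in auto)
  have injR: "y = 0\<^sub>v m" if y: "y \<in> carrier_vec m" and z: "R *\<^sub>v y = 0\<^sub>v k" for y
  proof -
    have "y = (Q * R) *\<^sub>v y" using QR y by simp
    also have "\<dots> = Q *\<^sub>v (R *\<^sub>v y)" using Qc Rc y by simp
    also have "\<dots> = 0\<^sub>v m" using z Qc by simp
    finally show ?thesis .
  qed
  have mk: "m \<le> k" by (rule inj_le[OF Rc injR])
  then have km': "k = m" using km by simp
  then show "length L = m" unfolding k_def .
  have Qc': "Q \<in> carrier_mat m m" using Qc km' by simp
  have "det Q \<noteq> 0"
  proof
    assume "det Q = 0"
    then obtain v where v: "v \<in> carrier_vec m" "v \<noteq> 0\<^sub>v m" "Q *\<^sub>v v = 0\<^sub>v m"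
      using det_0_iff_vec_prod_zero_field[OF Qc'] by auto
    then show False using injQ km' by auto
  qed
  from det_non_zero_imp_unit[OF Qc' this, of "()"]
  obtain B where B: "B \<in> carrier_mat m m" "B * Q = 1\<^sub>m m" "Q * B = 1\<^sub>m m"
    unfolding Units_def ring_mat_def by auto
  show "invertible_mat (mat_of_cols m L)" unfolding Q_def[symmetric] invertible_mat_def inverts_mat_def
    using B Qc' by (intro conjI exI[of _ B]) auto
qed

lemma upcomp_carrier: "well_formed u \<Longrightarrow> upcomp u j m \<in> carrier_mat (dim u (j + int m)) (dim u j)"
proof (induction m)
  case (Suc m)
  have "upm u (j + int m) \<in> carrier_mat (dim u (j + int m + 1)) (dim u (j + int m))"
    using Suc.prems unfolding well_formed_def by auto
  moreover have e: "j + int (Suc m) = j + int m + 1" by simp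
  ultimately show ?case unfolding e upcomp.simps using mult_carrier_mat Suc by blast
qed simp

lemma downcomp_carrier: "well_formed u \<Longrightarrow> downcomp u j m \<in> carrier_mat (dim u (j - int m)) (dim u j)"
proof (induction m)
  case (Suc m)
  have "downm u (j - int m - 1) \<in> carrier_mat (dim u (j - int m - 1)) (dim u (j - int m))"
    using Suc.prems unfolding well_formed_def by (metis diff_add_cancel)
  moreover have e: "j - int (Suc m) = j - int m - 1" by simp
  ultimately show ?case unfolding e downcomp.simps using mult_carrier_mat Suc by blast
qed simp

lemma path_carrier: "well_formed u \<Longrightarrow> path_map u j i \<in> carrier_mat (dim u i) (dim u j)"
  unfolding path_map_def using upcomp_carrier[of u j "nat (i - j)"] downcomp_carrier[of u j "nat (j - i)"]
  by auto

lemma path_refl: "path_map u i i = 1\<^sub>m (dim u i)"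
  unfolding path_map_def by simp

lemma path_up: "j \<le> i \<Longrightarrow> path_map u j (i + 1) = upm u i * path_map u j i"
proof -
  assume ji: "j \<le> i"
  have "nat (i + 1 - j) = Suc (nat (i - j))" using ji by simp
  moreover have "j + int (nat (i - j)) = i" using ji by simp
  ultimately show ?thesis unfolding path_map_def using ji by simp
qed

lemma path_down: "i < j \<Longrightarrow> path_map u j i = downm u i * path_map u j (i + 1)"
proof -
  assume ij: "i < j"
  have "nat (j - i) = Suc (nat (j - (i + 1)))" using ij by simp
  moreover have "j - int (nat (j - (i + 1))) - 1 = i" using ij by simp
  moreover have "path_map u j (i + 1) = downcomp u j (nat (j - (i + 1)))"
    unfolding path_map_def using ij by (cases "j = i + 1") auto
  ultimately show ?thesis unfolding path_map_def using ij by simp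
qed

lemma zero_mat_vec[simp]: "v \<in> carrier_vec c \<Longrightarrow> 0\<^sub>m r c *\<^sub>v v = (0\<^sub>v r :: 'a::field vec)"
  by (intro eq_vecI) (auto simp: scalar_prod_def)

lemma image_of_carrier: "M \<in> carrier_mat r c \<Longrightarrow> image_of M \<subseteq> carrier_vec r"
  unfolding image_of_def by auto

lemma mat_unit:
  assumes Q: "(Q :: 'a::field mat) \<in> carrier_mat m n" and p: "p < n"
  shows "Q *\<^sub>v unit_vec n p = col Q p"
proof (rule eq_vecI)
  fix i assume i: "i < dim_vec (col Q p)"
  have "row Q i \<bullet> unit_vec n p = row Q i $ p" using scalar_prod_right_unit[OF p, of "row Q i"] .
  then show "(Q *\<^sub>v unit_vec n p) $ i = col Q p $ i" using Q p i by simp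
qed (use Q in auto)

lemma sorted_split: "sorted (map fst xs) \<Longrightarrow> xs = filter (\<lambda>g. fst g < (c::int)) xs @ filter (\<lambda>g. \<not> fst g < c) xs"
proof (induction xs)
  case (Cons x xs)
  show ?case
  proof (cases "fst x < c")
    case True then show ?thesis using Cons by auto
  next
    case False
    then have "\<forall>y\<in>set xs. \<not> fst y < c" using Cons.prems by auto
    then show ?thesis using False by (simp add: filter_id_conv)
  qed
qed simp

lemma indep_swap:
  assumes "set xs \<subseteq> carrier_vec m" "set ys \<subseteq> carrier_vec m" "indep m (xs @ ys)"
  shows "indep m (ys @ xs)"
  unfolding indep_def
proof (intro allI impI)
  fix as assume len: "length as = length (ys @ xs)" and z: "lc m (ys @ xs) as = 0\<^sub>v m"
  obtain b a where ba: "as = b @ a" "length b = length ys" "length a = length xs"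
    using split_coeffs[of as ys xs] len by auto
  have "lc m (xs @ ys) (a @ b) = lc m xs a + lc m ys b" using ba assms by (simp add: lc_append)
  also have "\<dots> = lc m ys b + lc m xs a" using assms by (simp add: comm_add_vec[of _ m])
  also have "\<dots> = lc m (ys @ xs) as" using ba assms by (simp add: lc_append)
  finally have "lc m (xs @ ys) (a @ b) = 0\<^sub>v m" using z by simp
  moreover have "length (a @ b) = length (xs @ ys)" using ba by simp
  ultimately have "set (a @ b) \<subseteq> {0}" using assms(3) unfolding indep_def by blast
  then show "set as \<subseteq> {0}" using ba by auto
qed

lemma lspan_swap:
  assumes "set xs \<subseteq> carrier_vec m" "set ys \<subseteq> carrier_vec m"
  shows "lspan m (xs @ ys) \<subseteq> lspan m (ys @ xs)"
proof
  fix v assume "v \<in> lspan m (xs @ ys)"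
  then obtain as where as: "length as = length (xs @ ys)" "v = lc m (xs @ ys) as" unfolding lspan_def by auto
  obtain a b where ab: "as = a @ b" "length a = length xs" "length b = length ys"
    using split_coeffs[of as xs ys] as(1) by auto
  have "v = lc m xs a + lc m ys b" using ab as assms by (simp add: lc_append)
  also have "\<dots> = lc m ys b + lc m xs a" using assms by (simp add: comm_add_vec[of _ m])
  also have "\<dots> = lc m (ys @ xs) (b @ a)" using ab assms by (simp add: lc_append)
  finally show "v \<in> lspan m (ys @ xs)" unfolding lspan_def using ab
    by (intro CollectI exI[of _ "b @ a"]) auto
qed

locale lchain =
  fixes u :: "'a::field zrep" and lo hi :: int
  assumes lch: "linked_chain u" and exr: "exact_rep u"
    and lo_surj: "\<And>i. i < lo \<Longrightarrow> carrier_vec (dim u i) \<subseteq> image_of (downm u i)"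
    and hi_surj: "\<And>i. hi \<le> i \<Longrightarrow> carrier_vec (dim u (i+1)) \<subseteq> image_of (upm u i)"
begin

abbreviation "nn \<equiv> dim u"
abbreviation "F \<equiv> upm u"
abbreviation "G \<equiv> downm u"

lemma wf: "well_formed u" using lch unfolding linked_chain_def by auto

lemma Fc: "F i \<in> carrier_mat (nn (i+1)) (nn i)" using wf unfolding well_formed_def by auto
lemma Gc: "G i \<in> carrier_mat (nn i) (nn (i+1))" using wf unfolding well_formed_def by auto
lemma Fc': "F (i - 1) \<in> carrier_mat (nn i) (nn (i - 1))" using Fc[of "i - 1"] by simp
lemma GF: "G i * F i = 0\<^sub>m (nn i) (nn i)" using lch unfolding linked_chain_def by auto
lemma FG: "F i * G i = 0\<^sub>m (nn (i+1)) (nn (i+1))" using lch unfolding linked_chain_def by auto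
lemma link: "kernel_of (G (i-1)) \<inter> kernel_of (F i) = {0\<^sub>v (nn i)}" using lch unfolding linked_chain_def by auto
lemma exF: "kernel_of (F i) = image_of (G i)" using exr unfolding exact_rep_def by auto
lemma exG: "kernel_of (G i) = image_of (F i)" using exr unfolding exact_rep_def by auto

definition "A i = image_of (F (i - 1))"
definition "B i = image_of (G i)"

lemma A_carrier: "A i \<subseteq> carrier_vec (nn i)" unfolding A_def using image_of_carrier[OF Fc'] .
lemma B_carrier: "B i \<subseteq> carrier_vec (nn i)" unfolding B_def using image_of_carrier[OF Gc] .

lemma B_kernel: "B i = kernel_of (F i)" unfolding B_def exF ..
lemma A_kernel: "A (i + 1) = kernel_of (G i)" unfolding A_def exG by simp

lemma AB: "A i \<inter> B i \<subseteq> {0\<^sub>v (nn i)}"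
proof -
  have "A i = kernel_of (G (i - 1))" using A_kernel[of "i - 1"] by simp
  then show ?thesis using link[of i] B_kernel by auto
qed

lemma A_lo: "i \<le> lo \<Longrightarrow> A i = {0\<^sub>v (nn i)}"
proof -
  assume "i \<le> lo"
  then have "carrier_vec (nn (i - 1)) \<subseteq> kernel_of (F (i - 1))" using lo_surj[of "i - 1"] exF by simp
  then have z: "\<And>w. w \<in> carrier_vec (nn (i - 1)) \<Longrightarrow> F (i - 1) *\<^sub>v w = 0\<^sub>v (nn i)"
    unfolding kernel_of_def using Fc'[of i] by auto
  show ?thesis unfolding A_def image_of_def using Fc'[of i] z by (auto intro!: exI[of _ "0\<^sub>v (nn (i - 1))"])
qed

lemma B_hi: "hi \<le> i \<Longrightarrow> B i = {0\<^sub>v (nn i)}"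
proof -
  assume "hi \<le> i"
  then have "carrier_vec (nn (i + 1)) \<subseteq> kernel_of (G i)" using hi_surj[of i] exG by simp
  then have z: "\<And>w. w \<in> carrier_vec (nn (i + 1)) \<Longrightarrow> G i *\<^sub>v w = 0\<^sub>v (nn i)"
    unfolding kernel_of_def using Gc[of i] by auto
  show ?thesis unfolding B_def image_of_def using Gc[of i] z by (auto intro!: exI[of _ "0\<^sub>v (nn (i + 1))"])
qed

lemma A_hi: "hi < i \<Longrightarrow> A i = carrier_vec (nn i)"
  using hi_surj[of "i - 1"] A_carrier[of i] unfolding A_def by auto

lemma B_lo: "i < lo \<Longrightarrow> B i = carrier_vec (nn i)"
  using lo_surj[of i] B_carrier[of i] unfolding B_def by auto

definition "C i = ext (nn i) (cols (F (i - 1)) @ cols (G i)) (nn i)"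

lemma C_cmpl: "cmpl (nn i) (A i) (B i) (C i)"
  unfolding A_def B_def C_def by (rule ext_cmpl[OF Fc' Gc])

lemma C_carrier: "set (C i) \<subseteq> carrier_vec (nn i)"
  using C_cmpl unfolding cmpl_def by auto

lemma C_out: "i < lo \<or> hi < i \<Longrightarrow> C i = []"
proof -
  assume io: "i < lo \<or> hi < i"
  have c1: "set (cols (F (i - 1))) \<subseteq> carrier_vec (nn i)" using cols_dim[of "F (i - 1)"] Fc'[of i] by auto
  have c2: "set (cols (G i)) \<subseteq> carrier_vec (nn i)" using cols_dim[of "G i"] Gc[of i] by auto
  show ?thesis unfolding C_def
  proof (rule ext_empty)
    fix l assume l: "l < nn i"
    show "unit_vec (nn i) l \<in> lspan (nn i) (cols (F (i - 1)) @ cols (G i))"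
    proof (cases "i < lo")
      case True
      then have "unit_vec (nn i) l \<in> lspan (nn i) (cols (G i))"
        using B_lo[of i] lspan_cols[OF Gc[of i]] unfolding B_def by auto
      then show ?thesis using lspan_mono2[OF c1 c2] by auto
    next
      case False
      then have "hi < i" using io by simp
      then have "unit_vec (nn i) l \<in> lspan (nn i) (cols (F (i - 1)))"
        using A_hi[of i] lspan_cols[OF Fc'] unfolding A_def by auto
      then show ?thesis using lspan_mono1[OF c1 c2] by auto
    qed
  qed
qed

definition "gens = concat (map (\<lambda>j. map (Pair j) (C j)) [lo..hi])"

lemma gens_sorted: "sorted (map fst gens)"
proof -
  have "sorted (map fst (concat (map (\<lambda>j. map (Pair j) (C j)) js)))" if "sorted js" for js :: "int list"
    using that
  proof (induction js)
    case (Cons j js)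
    then show ?case by (auto simp: sorted_append o_def map_replicate_const)
  qed simp
  then show ?thesis unfolding gens_def by simp
qed

lemma gens_set: "g \<in> set gens \<Longrightarrow> snd g \<in> set (C (fst g)) \<and> lo \<le> fst g \<and> fst g \<le> hi"
  unfolding gens_def by auto

lemma gens_carrier: "g \<in> set gens \<Longrightarrow> snd g \<in> carrier_vec (nn (fst g))"
  using gens_set C_carrier by blast

lemma filter_eq: "filter (\<lambda>g. fst g = i) gens = map (Pair i) (C i)"
proof -
  have gen: "filter (\<lambda>g. fst g = i) (concat (map (\<lambda>j. map (Pair j) (C j)) js)) =
      concat (map (\<lambda>j. if j = i then map (Pair j) (C j) else []) js)" for js
    by (induction js) (auto simp: filter_empty_conv)
  show ?thesis
  proof (cases "lo \<le> i \<and> i \<le> hi")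
    case True
    have e1: "[lo..hi] = [lo..i - 1] @ i # [i + 1..hi]"
      using True by (metis upto_rec1 upto_split1 add.commute)
    have e2: "concat (map (\<lambda>j. if j = i then map (Pair j) (C j) else []) [lo..i - 1]) = []"
      by auto
    have e3: "concat (map (\<lambda>j. if j = i then map (Pair j) (C j) else []) [i + 1..hi]) = []"
      by auto
    show ?thesis
      by (simp only: gens_def gen e1 map_append concat_append list.map concat.simps e2 e3 if_True) simp
  next
    case False
    then have e1: "C i = []" using C_out by auto
    have e2: "concat (map (\<lambda>j. if j = i then map (Pair j) (C j) else []) [lo..hi]) = []"
      using False by auto
    show ?thesis by (simp only: gens_def gen e1 e2 list.map(1))
  qed
qed

definition "vecof i g = path_map u (fst g) i *\<^sub>v snd g"

lemma vecof_carrier: "g \<in> set gens \<Longrightarrow> vecof i g \<in> carrier_vec (nn i)"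
  unfolding vecof_def using path_carrier[OF wf, of "fst g" i] gens_carrier[of g] by auto

lemma vecof_same: "g \<in> set gens \<Longrightarrow> fst g = i \<Longrightarrow> vecof i g = snd g"
  unfolding vecof_def using path_refl[of u i] gens_carrier[of g] by simp

lemma vecof_up: "g \<in> set gens \<Longrightarrow> fst g \<le> i \<Longrightarrow> vecof (i + 1) g = F i *\<^sub>v vecof i g"
  unfolding vecof_def using path_up[of "fst g" i u] path_carrier[OF wf, of "fst g" i] Fc[of i] gens_carrier[of g]
  by simp

lemma vecof_down: "g \<in> set gens \<Longrightarrow> i < fst g \<Longrightarrow> vecof i g = G i *\<^sub>v vecof (i + 1) g"
  unfolding vecof_def using path_down[of i "fst g" u] path_carrier[OF wf, of "fst g" "i + 1"] Gc[of i] gens_carrier[of g]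
  by simp

lemma vecof_up0: "g \<in> set gens \<Longrightarrow> i < fst g \<Longrightarrow> F i *\<^sub>v vecof i g = 0\<^sub>v (nn (i + 1))"
proof -
  assume g: "g \<in> set gens" "i < fst g"
  have "F i *\<^sub>v vecof i g = F i *\<^sub>v (G i *\<^sub>v vecof (i + 1) g)" using vecof_down[OF g] by simp
  also have "\<dots> = (F i * G i) *\<^sub>v vecof (i + 1) g" using Fc[of i] Gc[of i] vecof_carrier[OF g(1)] by simp
  also have "\<dots> = 0\<^sub>v (nn (i + 1))" unfolding FG using vecof_carrier[OF g(1)] by simp
  finally show ?thesis .
qed

lemma vecof_down0: "g \<in> set gens \<Longrightarrow> fst g \<le> i \<Longrightarrow> G i *\<^sub>v vecof (i + 1) g = 0\<^sub>v (nn i)"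
proof -
  assume g: "g \<in> set gens" "fst g \<le> i"
  have "G i *\<^sub>v vecof (i + 1) g = G i *\<^sub>v (F i *\<^sub>v vecof i g)" using vecof_up[OF g] by simp
  also have "\<dots> = (G i * F i) *\<^sub>v vecof i g" using Fc[of i] Gc[of i] vecof_carrier[OF g(1)] by simp
  also have "\<dots> = 0\<^sub>v (nn i)" unfolding GF using vecof_carrier[OF g(1)] by simp
  finally show ?thesis .
qed

lemma F1: "filter (\<lambda>g. fst g < i + 1) gens = filter (\<lambda>g. fst g < i) gens @ filter (\<lambda>g. fst g = i) gens"
proof -
  have s: "sorted (map fst (filter (\<lambda>g. fst g < i + 1) gens))" using sorted_filter[OF gens_sorted] .
  have "filter (\<lambda>g. fst g < i + 1) gens = filter (\<lambda>g. fst g < i) (filter (\<lambda>g. fst g < i + 1) gens)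
      @ filter (\<lambda>g. \<not> fst g < i) (filter (\<lambda>g. fst g < i + 1) gens)"
    by (rule sorted_split[OF s])
  also have "filter (\<lambda>g. fst g < i) (filter (\<lambda>g. fst g < i + 1) gens) = filter (\<lambda>g. fst g < i) gens"
    by (simp add: filter_filter) (rule filter_cong, auto)
  also have "filter (\<lambda>g. \<not> fst g < i) (filter (\<lambda>g. fst g < i + 1) gens) = filter (\<lambda>g. fst g = i) gens"
    by (simp add: filter_filter) (rule filter_cong, auto)
  finally show ?thesis .
qed

lemma F2: "filter (\<lambda>g. i < fst g) gens = filter (\<lambda>g. fst g = i + 1) gens @ filter (\<lambda>g. i + 1 < fst g) gens"
proof -
  have s: "sorted (map fst (filter (\<lambda>g. i < fst g) gens))" using sorted_filter[OF gens_sorted] .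
  have "filter (\<lambda>g. i < fst g) gens = filter (\<lambda>g. fst g < i + 2) (filter (\<lambda>g. i < fst g) gens)
      @ filter (\<lambda>g. \<not> fst g < i + 2) (filter (\<lambda>g. i < fst g) gens)"
    by (rule sorted_split[OF s])
  also have "filter (\<lambda>g. fst g < i + 2) (filter (\<lambda>g. i < fst g) gens) = filter (\<lambda>g. fst g = i + 1) gens"
    by (simp add: filter_filter) (rule filter_cong, auto)
  also have "filter (\<lambda>g. \<not> fst g < i + 2) (filter (\<lambda>g. i < fst g) gens) = filter (\<lambda>g. i + 1 < fst g) gens"
    by (simp add: filter_filter) (rule filter_cong, auto)
  finally show ?thesis .
qed

lemma F3: "gens = filter (\<lambda>g. fst g < i) gens @ filter (\<lambda>g. fst g = i) gens @ filter (\<lambda>g. i < fst g) gens"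
proof -
  have "gens = filter (\<lambda>g. fst g < i + 1) gens @ filter (\<lambda>g. \<not> fst g < i + 1) gens"
    by (rule sorted_split[OF gens_sorted])
  also have "filter (\<lambda>g. \<not> fst g < i + 1) gens = filter (\<lambda>g. i < fst g) gens"
    by (rule filter_cong) auto
  finally show ?thesis unfolding F1 by simp
qed

end

lemma conj_step:
  fixes T :: "'a::field mat"
  assumes c: "Q1 \<in> carrier_mat N N" "Q2 \<in> carrier_mat N N" "P1 \<in> carrier_mat N N" "P2 \<in> carrier_mat N N"
    "T \<in> carrier_mat N N" "D \<in> carrier_mat N N"
    and i1: "Q1 * P1 = 1\<^sub>m N" and i2: "P2 * Q2 = 1\<^sub>m N" and e: "T * Q1 = Q2 * D"
  shows "P2 * T = D * P1"
proof -
  have "P2 * T = P2 * T * (Q1 * P1)" using i1 c by simp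
  also have "\<dots> = P2 * (T * Q1) * P1" using c by (simp add: assoc_mult_mat[of _ N N _ N _ N])
  also have "\<dots> = P2 * (Q2 * D) * P1" using e by simp
  also have "\<dots> = (P2 * Q2) * D * P1" using c by (simp add: assoc_mult_mat[of _ N N _ N _ N])
  also have "\<dots> = D * P1" using i2 c by simp
  finally show ?thesis .
qed

lemma inv_exists:
  assumes "invertible_mat (Q :: 'a::field mat)" "Q \<in> carrier_mat N N"
  shows "\<exists>P. P \<in> carrier_mat N N \<and> P * Q = 1\<^sub>m N \<and> Q * P = 1\<^sub>m N \<and> invertible_mat P"
proof -
  from assms obtain B where B: "Q * B = 1\<^sub>m N" "B * Q = 1\<^sub>m (dim_row B)"
    unfolding invertible_mat_def inverts_mat_def by auto
  have "dim_col B = N" using B(1) assms(2) by (metis index_mult_mat(3) index_one_mat(3))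
  moreover have "dim_row B = N" using B(2) assms(2) by (metis index_mult_mat(3) index_one_mat(3) carrier_matD(2))
  ultimately have Bc: "B \<in> carrier_mat N N" by auto
  have "invertible_mat B" unfolding invertible_mat_def inverts_mat_def using B Bc assms(2)
    by (intro conjI exI[of _ Q]) auto
  then show ?thesis using B Bc by auto
qed

lemma col_diag_prefix: "p < N \<Longrightarrow> col (diag_prefix N a :: 'a::field mat) p = (if p < a then unit_vec N p else 0\<^sub>v N)"
  unfolding diag_prefix_def by (intro eq_vecI) auto

lemma col_diag_suffix: "p < N \<Longrightarrow> col (diag_suffix N a :: 'a::field mat) p = (if a \<le> p then unit_vec N p else 0\<^sub>v N)"
  unfolding diag_suffix_def by (intro eq_vecI) auto

lemma diag_prefix_carrier[simp]: "diag_prefix N a \<in> carrier_mat N N"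
  unfolding diag_prefix_def by simp

lemma diag_suffix_carrier[simp]: "diag_suffix N a \<in> carrier_mat N N"
  unfolding diag_suffix_def by simp

context lchain begin

definition "LA i = map (vecof i) (filter (\<lambda>g. fst g < i) gens)"
definition "LB i = map (vecof i) (filter (\<lambda>g. i < fst g) gens)"

lemma LA_carrier: "set (LA i) \<subseteq> carrier_vec (nn i)"
  unfolding LA_def using vecof_carrier by auto

lemma LB_carrier: "set (LB i) \<subseteq> carrier_vec (nn i)"
  unfolding LB_def using vecof_carrier by auto

lemma Pair_in_gens: "c \<in> set (C i) \<Longrightarrow> (i, c) \<in> set gens"
proof -
  assume "c \<in> set (C i)"
  then have "(i, c) \<in> set (filter (\<lambda>g. fst g = i) gens)" unfolding filter_eq by auto
  then show ?thesis by simp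
qed

lemma LA_step: "LA (i + 1) = map (\<lambda>v. F i *\<^sub>v v) (LA i @ C i)"
proof -
  have "LA (i + 1) = map (vecof (i + 1)) (filter (\<lambda>g. fst g < i) gens) @ map (vecof (i + 1)) (map (Pair i) (C i))"
    unfolding LA_def F1 filter_eq by simp
  also have "map (vecof (i + 1)) (filter (\<lambda>g. fst g < i) gens) = map (\<lambda>v. F i *\<^sub>v v) (LA i)"
    unfolding LA_def by (auto intro!: map_cong vecof_up)
  also have "map (vecof (i + 1)) (map (Pair i) (C i)) = map (\<lambda>v. F i *\<^sub>v v) (C i)"
  proof -
    have "vecof (i + 1) (i, c) = F i *\<^sub>v c" if "c \<in> set (C i)" for c
      using vecof_up[OF Pair_in_gens[OF that], of i] vecof_same[OF Pair_in_gens[OF that]] by simp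
    then show ?thesis by auto
  qed
  finally show ?thesis by simp
qed

lemma LB_step: "LB i = map (\<lambda>v. G i *\<^sub>v v) (C (i + 1) @ LB (i + 1))"
proof -
  have "LB i = map (vecof i) (map (Pair (i + 1)) (C (i + 1))) @ map (vecof i) (filter (\<lambda>g. i + 1 < fst g) gens)"
    unfolding LB_def F2[of i] filter_eq by simp
  also have "map (vecof i) (filter (\<lambda>g. i + 1 < fst g) gens) = map (\<lambda>v. G i *\<^sub>v v) (LB (i + 1))"
    unfolding LB_def by (auto intro!: map_cong vecof_down)
  also have "map (vecof i) (map (Pair (i + 1)) (C (i + 1))) = map (\<lambda>v. G i *\<^sub>v v) (C (i + 1))"
  proof -
    have "vecof i (i + 1, c) = G i *\<^sub>v c" if "c \<in> set (C (i + 1))" for c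
      using vecof_down[OF Pair_in_gens[OF that], of i] vecof_same[OF Pair_in_gens[OF that]] by simp
    then show ?thesis by auto
  qed
  finally show ?thesis by simp
qed

lemma UA: "indep (nn i) (LA i) \<and> lspan (nn i) (LA i) = A i"
proof (cases "i \<le> lo")
  case True
  then have "\<forall>g\<in>set gens. \<not> fst g < i" using gens_set by force
  then have "filter (\<lambda>g. fst g < i) gens = []" by (simp add: filter_empty_conv)
  then have "LA i = []" unfolding LA_def by simp
  then show ?thesis using A_lo[OF True] by simp
next
  case False
  then have "lo \<le> i" by simp
  then show ?thesis
  proof (induction i rule: int_ge_induct)
    case base
    have "\<forall>g\<in>set gens. \<not> fst g < lo" using gens_set by force
    then have "filter (\<lambda>g. fst g < lo) gens = []" by (simp add: filter_empty_conv)
    then have "LA lo = []" unfolding LA_def by simp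
    then show ?case using A_lo[of lo] by simp
  next
    case (step i)
    have P: "indep (nn (i + 1)) (map (\<lambda>v. F i *\<^sub>v v) (LA i @ C i))"
      "lspan (nn (i + 1)) (map (\<lambda>v. F i *\<^sub>v v) (LA i @ C i)) = image_of (F i)"
      using push[OF Fc[of i] LA_carrier[of i] conjunct1[OF step.IH] conjunct2[OF step.IH] B_kernel AB C_cmpl]
      by auto
    then show ?case unfolding LA_step A_def by simp
  qed
qed

lemma UB: "indep (nn i) (LB i) \<and> lspan (nn i) (LB i) = B i"
proof (cases "hi \<le> i")
  case True
  then have "\<forall>g\<in>set gens. \<not> i < fst g" using gens_set by force
  then have "filter (\<lambda>g. i < fst g) gens = []" by (simp add: filter_empty_conv)
  then have "LB i = []" unfolding LB_def by simp
  then show ?thesis using B_hi[OF True] by simp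
next
  case False
  then have "i \<le> hi" by simp
  then show ?thesis
  proof (induction i rule: int_le_induct)
    case base
    have "\<forall>g\<in>set gens. \<not> hi < fst g" using gens_set by force
    then have "filter (\<lambda>g. hi < fst g) gens = []" by (simp add: filter_empty_conv)
    then have "LB hi = []" unfolding LB_def by simp
    then show ?case using B_hi[of hi] by simp
  next
    case (step i)
    define j where "j = i - 1"
    have ij: "i = j + 1" unfolding j_def by simp
    have IH: "indep (nn (j + 1)) (LB (j + 1))" "lspan (nn (j + 1)) (LB (j + 1)) = B (j + 1)"
      using step.IH unfolding ij by auto
    have BA: "B (j + 1) \<inter> A (j + 1) \<subseteq> {0\<^sub>v (nn (j + 1))}" using AB[of "j + 1"] by auto
    have cm: "cmpl (nn (j + 1)) (B (j + 1)) (A (j + 1)) (C (j + 1))"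
      by (rule cmpl_sym[OF C_cmpl A_carrier B_carrier])
    note P = push[OF Gc[of j] LB_carrier[of "j + 1"] IH(1) IH(2) A_kernel BA cm]
    define f where "f = (\<lambda>v. G j *\<^sub>v v)"
    have c1: "set (map f (LB (j + 1))) \<subseteq> carrier_vec (nn j)" unfolding f_def using LB_carrier[of "j + 1"] Gc[of j] by (auto intro: mult_mat_vec_carrier)
    have c2: "set (map f (C (j + 1))) \<subseteq> carrier_vec (nn j)" unfolding f_def using C_carrier[of "j + 1"] Gc[of j] by (auto intro: mult_mat_vec_carrier)
    have ind: "indep (nn j) (map f (C (j + 1)) @ map f (LB (j + 1)))"
      by (rule indep_swap[OF c1 c2]) (use P(1) in \<open>simp add: f_def\<close>)
    have sp: "lspan (nn j) (map f (C (j + 1)) @ map f (LB (j + 1))) = B j"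
    proof -
      have "lspan (nn j) (map f (LB (j + 1)) @ map f (C (j + 1))) = B j"
        using P(2) unfolding B_def f_def by simp
      moreover have "lspan (nn j) (map f (LB (j + 1)) @ map f (C (j + 1))) = lspan (nn j) (map f (C (j + 1)) @ map f (LB (j + 1)))"
        using lspan_swap[OF c1 c2] lspan_swap[OF c2 c1] by auto
      ultimately show ?thesis by simp
    qed
    have "LB j = map f (C (j + 1)) @ map f (LB (j + 1))" unfolding LB_step[of j] f_def by simp
    then show ?case using ind sp unfolding j_def by simp
  qed
qed

lemma cols_decomp: "map (vecof i) gens = LA i @ C i @ LB i"
proof -
  have "map (vecof i) gens = LA i @ map (vecof i) (map (Pair i) (C i)) @ LB i"
    unfolding LA_def LB_def filter_eq[symmetric] by (subst F3[of i]) simp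
  also have "map (vecof i) (map (Pair i) (C i)) = C i"
    using vecof_same[OF Pair_in_gens] by (auto intro: map_idI)
  finally show ?thesis .
qed

lemma Q_props: "length gens = nn i \<and> invertible_mat (mat_of_cols (nn i) (map (vecof i) gens))"
proof -
  have v: "indep (nn i) (LA i @ C i @ LB i)" "lspan (nn i) (LA i @ C i @ LB i) = carrier_vec (nn i)"
    using vertex[OF LA_carrier conjunct1[OF UA] conjunct2[OF UA] LB_carrier conjunct1[OF UB] conjunct2[OF UB] AB C_cmpl]
    by auto
  have c: "set (LA i @ C i @ LB i) \<subseteq> carrier_vec (nn i)" using LA_carrier LB_carrier C_carrier by auto
  have "length gens = length (LA i @ C i @ LB i)" using cols_decomp[of i] by (metis length_map)
  then show ?thesis using final_inv[OF c v] unfolding cols_decomp by simp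
qed

definition "N = length gens"

lemma nn_N: "nn i = N" unfolding N_def using Q_props[of i] by simp

definition "Qm i = mat_of_cols N (map (vecof i) gens)"

lemma Qm_carrier: "Qm i \<in> carrier_mat N N" unfolding Qm_def N_def
  using mat_of_cols_carrier(1)[of "length gens" "map (vecof i) gens"] by simp

lemma Qm_inv: "invertible_mat (Qm i)" unfolding Qm_def using Q_props[of i] nn_N[of i] by simp

definition "K i = length (filter (\<lambda>g. fst g \<le> i) gens)"

lemma K_idx: "p < N \<Longrightarrow> fst (gens ! p) \<le> i \<longleftrightarrow> p < K i"
proof -
  assume p: "p < N"
  have e: "filter (\<lambda>g. fst g < i + 1) gens = filter (\<lambda>g. fst g \<le> i) gens" by (rule filter_cong) auto
  have g: "gens = filter (\<lambda>g. fst g \<le> i) gens @ filter (\<lambda>g. \<not> fst g < i + 1) gens"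
    using sorted_split[OF gens_sorted, of "i + 1"] unfolding e .
  show ?thesis
  proof (cases "p < K i")
    case True
    then have "gens ! p = filter (\<lambda>g. fst g \<le> i) gens ! p" unfolding K_def by (subst g) (simp add: nth_append)
    moreover have "filter (\<lambda>g. fst g \<le> i) gens ! p \<in> set (filter (\<lambda>g. fst g \<le> i) gens)"
      by (rule nth_mem) (use True in \<open>simp add: K_def\<close>)
    ultimately have "fst (gens ! p) \<le> i" by simp
    then show ?thesis using True by simp
  next
    case False
    have "gens ! p = filter (\<lambda>g. \<not> fst g < i + 1) gens ! (p - K i)" using False unfolding K_def
      by (subst g) (simp add: nth_append)
    moreover have "p - K i < length (filter (\<lambda>g. \<not> fst g < i + 1) gens)"
      using p False g unfolding N_def K_def by (metis diff_less_mono length_append add_diff_cancel_left' not_less)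
    ultimately have "gens ! p \<in> set (filter (\<lambda>g. \<not> fst g < i + 1) gens)" using nth_mem by metis
    then have "\<not> fst (gens ! p) \<le> i" by simp
    then show ?thesis using False by simp
  qed
qed

lemma K_le: "K i \<le> N" unfolding K_def N_def by simp

lemma col_Qm: "p < N \<Longrightarrow> col (Qm i) p = vecof i (gens ! p)"
  unfolding Qm_def using vecof_carrier[of "gens ! p" i] nn_N[of i] N_def by simp

lemma inter_up: "F i * Qm i = Qm (i + 1) * diag_prefix N (K i)"
proof (rule mat_col_eqI)
  fix p assume "p < dim_col (Qm (i + 1) * diag_prefix N (K i))"
  then have p: "p < N" unfolding diag_prefix_def by simp
  have Fc2: "F i \<in> carrier_mat N N" using Fc[of i] nn_N by simp
  have g: "gens ! p \<in> set gens" using p N_def by simp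
  have "col (F i * Qm i) p = F i *\<^sub>v vecof i (gens ! p)" using col_mult2[OF Fc2 Qm_carrier p] col_Qm[OF p] by simp
  also have "\<dots> = (if p < K i then vecof (i + 1) (gens ! p) else 0\<^sub>v N)"
    using vecof_up[OF g, of i] vecof_up0[OF g, of i] K_idx[OF p, of i] nn_N by auto
  also have "\<dots> = col (Qm (i + 1) * diag_prefix N (K i)) p"
  proof -
    have 1: "col (Qm (i + 1) * diag_prefix N (K i)) p = Qm (i + 1) *\<^sub>v col (diag_prefix N (K i)) p"
      by (rule col_mult2[OF Qm_carrier diag_prefix_carrier p])
    have 2: "col (diag_prefix N (K i) :: 'a mat) p = (if p < K i then unit_vec N p else 0\<^sub>v N)"
      by (rule col_diag_prefix[OF p])
    show ?thesis unfolding 1 2 using mat_unit[OF Qm_carrier p, of "i + 1"] col_Qm[OF p, of "i + 1"] Qm_carrier[of "i + 1"]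
      by simp
  qed
  finally show "col (F i * Qm i) p = col (Qm (i + 1) * diag_prefix N (K i)) p" .
qed (use Fc[of i] nn_N Qm_carrier[of i] Qm_carrier[of "i + 1"] in \<open>auto simp: diag_prefix_def\<close>)

lemma inter_down: "G i * Qm (i + 1) = Qm i * diag_suffix N (K i)"
proof (rule mat_col_eqI)
  fix p assume "p < dim_col (Qm i * diag_suffix N (K i))"
  then have p: "p < N" unfolding diag_suffix_def by simp
  have Gc2: "G i \<in> carrier_mat N N" using Gc[of i] nn_N by simp
  have g: "gens ! p \<in> set gens" using p N_def by simp
  have "col (G i * Qm (i + 1)) p = G i *\<^sub>v vecof (i + 1) (gens ! p)" using col_mult2[OF Gc2 Qm_carrier p] col_Qm[OF p] by simp
  also have "\<dots> = (if K i \<le> p then vecof i (gens ! p) else 0\<^sub>v N)"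
    using vecof_down[OF g, of i] vecof_down0[OF g, of i] K_idx[OF p, of i] nn_N by auto
  also have "\<dots> = col (Qm i * diag_suffix N (K i)) p"
  proof -
    have 1: "col (Qm i * diag_suffix N (K i)) p = Qm i *\<^sub>v col (diag_suffix N (K i)) p"
      by (rule col_mult2[OF Qm_carrier diag_suffix_carrier p])
    have 2: "col (diag_suffix N (K i) :: 'a mat) p = (if K i \<le> p then unit_vec N p else 0\<^sub>v N)"
      by (rule col_diag_suffix[OF p])
    show ?thesis unfolding 1 2 using mat_unit[OF Qm_carrier p, of i] col_Qm[OF p, of i] Qm_carrier[of i]
      by simp
  qed
  finally show "col (G i * Qm (i + 1)) p = col (Qm i * diag_suffix N (K i)) p" .
qed (use Gc[of i] nn_N Qm_carrier[of i] Qm_carrier[of "i + 1"] in \<open>auto simp: diag_suffix_def\<close>)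

lemma iso_target: "iso_rep u \<lparr>dim = (\<lambda>i. N), upm = (\<lambda>i. diag_prefix N (K i)), downm = (\<lambda>i. diag_suffix N (K i))\<rparr>"
proof -
  have "\<forall>i. \<exists>P. P \<in> carrier_mat N N \<and> P * Qm i = 1\<^sub>m N \<and> Qm i * P = 1\<^sub>m N \<and> invertible_mat P"
    using inv_exists[OF Qm_inv Qm_carrier] by blast
  then obtain P where P: "\<And>i. P i \<in> carrier_mat N N" "\<And>i. P i * Qm i = 1\<^sub>m N"
    "\<And>i. Qm i * P i = 1\<^sub>m N" "\<And>i. invertible_mat (P i)"
    by metis
  show ?thesis unfolding iso_rep_def
  proof (intro exI[of _ P] allI conjI)
    fix i
    show "P i \<in> carrier_mat (dim \<lparr>dim = (\<lambda>i. N), upm = (\<lambda>i. diag_prefix N (K i)), downm = (\<lambda>i. diag_suffix N (K i))\<rparr> i) (nn i)"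
      using P(1) nn_N by simp
    show "invertible_mat (P i)" by (rule P(4))
    show "P (i + 1) * F i = upm \<lparr>dim = (\<lambda>i. N), upm = (\<lambda>i. diag_prefix N (K i)), downm = (\<lambda>i. diag_suffix N (K i))\<rparr> i * P i"
      using conj_step[OF Qm_carrier[of i] Qm_carrier[of "i + 1"] P(1)[of i] P(1)[of "i + 1"] _ diag_prefix_carrier
        P(3)[of i] P(2)[of "i + 1"] inter_up[of i]] Fc[of i] nn_N by simp
    show "P i * G i = downm \<lparr>dim = (\<lambda>i. N), upm = (\<lambda>i. diag_prefix N (K i)), downm = (\<lambda>i. diag_suffix N (K i))\<rparr> i * P (i + 1)"
      using conj_step[OF Qm_carrier[of "i + 1"] Qm_carrier[of i] P(1)[of "i + 1"] P(1)[of i] _ diag_suffix_carrier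
        P(3)[of "i + 1"] P(2)[of i] inter_down[of i]] Gc[of i] nn_N by simp
  qed
qed

end

lemma diag_prefix_0: "diag_prefix n 0 = (0\<^sub>m n n :: 'a::field mat)"
  unfolding diag_prefix_def by (intro eq_matI) auto
lemma diag_prefix_n: "diag_prefix n n = (1\<^sub>m n :: 'a::field mat)"
  unfolding diag_prefix_def by (intro eq_matI) auto
lemma diag_suffix_0: "diag_suffix n 0 = (1\<^sub>m n :: 'a::field mat)"
  unfolding diag_suffix_def by (intro eq_matI) auto
lemma diag_suffix_n: "diag_suffix n n = (0\<^sub>m n n :: 'a::field mat)"
  unfolding diag_suffix_def by (intro eq_matI) auto

lemma sum_list_upto: "sum_list (map f [a..b]) = sum f {a..b}"
  by (simp add: interv_sum_list_conv_sum_set_int)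

lemma length_filter_concat:
  "length (filter P (concat (map h js))) = sum_list (map (\<lambda>j. length (filter P (h j))) js)"
  by (induction js) auto

context lchain begin

definition "f j = length (C j)"

lemma K_sum: "K i = (\<Sum>j\<in>{lo..hi}. if j \<le> i then f j else 0)"
proof -
  have "K i = sum_list (map (\<lambda>j. length (filter (\<lambda>g. fst g \<le> i) (map (Pair j) (C j)))) [lo..hi])"
    unfolding K_def gens_def by (rule length_filter_concat)
  also have "(\<lambda>j. length (filter (\<lambda>g. fst g \<le> i) (map (Pair j) (C j)))) = (\<lambda>j. if j \<le> i then f j else 0)"
    unfolding f_def by (rule ext) (auto simp: filter_empty_conv o_def)
  finally show ?thesis by (simp only: sum_list_upto)
qed

definition "S = {j. f j \<noteq> 0}"

lemma S_sub: "S \<subseteq> {lo..hi}"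
  unfolding S_def f_def using C_out by fastforce

lemma S_fin: "finite S" using S_sub finite_subset by blast

lemma f_out: "j \<notin> S \<Longrightarrow> f j = 0" unfolding S_def by simp

lemma K_S: "K i = sum f {j \<in> S. j \<le> i}"
proof -
  have "K i = sum f {j \<in> {lo..hi}. j \<le> i}"
    unfolding K_sum by (simp add: sum.inter_filter[symmetric])
  also have "\<dots> = sum f {j \<in> S. j \<le> i}"
  proof (rule sum.mono_neutral_right)
    show "finite {j \<in> {lo..hi}. j \<le> i}" by (rule finite_subset[of _ "{lo..hi}"]) auto
    show "{j \<in> S. j \<le> i} \<subseteq> {j \<in> {lo..hi}. j \<le> i}" using S_sub by auto
    show "\<forall>j\<in>{j \<in> {lo..hi}. j \<le> i} - {j \<in> S. j \<le> i}. f j = 0" using f_out by blast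
  qed
  finally show ?thesis .
qed

lemma N_S: "N = sum f S"
proof -
  have "filter (\<lambda>g. fst g \<le> hi) gens = gens" using gens_set by (auto simp: filter_id_conv)
  then have "N = K hi" unfolding K_def N_def by simp
  moreover have "{j \<in> S. j \<le> hi} = S" using S_sub by auto
  ultimately show ?thesis using K_S[of hi] by simp
qed

end

locale lchain_nt = lchain +
  assumes nontriv: "\<And>i. dim u i \<noteq> 0"
begin

lemma N_pos: "N > 0" using nontriv[of 0] nn_N[of 0] by simp

lemma S_ne: "S \<noteq> {}"
  using N_pos N_S by auto

definition "t = Min S"
definition "e = Max S"

lemma t_S: "t \<in> S" unfolding t_def using S_fin S_ne by simp
lemma e_S: "e \<in> S" unfolding e_def using S_fin S_ne by simp
lemma t_le: "j \<in> S \<Longrightarrow> t \<le> j" unfolding t_def using S_fin by simp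
lemma e_ge: "j \<in> S \<Longrightarrow> j \<le> e" unfolding e_def using S_fin by simp
lemma te: "t \<le> e" using t_le[OF e_S] .

definition "r = map f [t..e]"

lemma r_len: "int (length r) - 1 = e - t" unfolding r_def using te by simp

lemma r_valid: "valid_tuple r"
proof -
  have ne: "r \<noteq> []" unfolding r_def using te by simp
  have "hd r = f t" unfolding r_def using upto_rec1[OF te] by simp
  moreover have "last r = f e" unfolding r_def using upto_rec2[OF te] by simp
  ultimately show ?thesis unfolding valid_tuple_def using ne t_S e_S S_def by simp
qed

lemma K_interval: "t \<le> i \<Longrightarrow> K i = sum f {t..i}"
proof -
  assume ti: "t \<le> i"
  have "K i = sum f {j \<in> S. j \<le> i}" by (rule K_S)
  also have "\<dots> = sum f {t..i}"
  proof (rule sum.mono_neutral_left)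
    show "finite {t..i}" by simp
    show "{j \<in> S. j \<le> i} \<subseteq> {t..i}" using t_le by auto
    show "\<forall>j\<in>{t..i} - {j \<in> S. j \<le> i}. f j = 0"
    proof
      fix j assume "j \<in> {t..i} - {j \<in> S. j \<le> i}"
      then have "j \<notin> S" by auto
      then show "f j = 0" by (rule f_out)
    qed
  qed
  finally show ?thesis .
qed

lemma K_low: "i < t \<Longrightarrow> K i = 0"
proof -
  assume "i < t"
  then have "{j \<in> S. j \<le> i} = {}" using t_le by fastforce
  then show ?thesis using K_S[of i] by (simp only: sum.empty)
qed

lemma K_high: "e \<le> i \<Longrightarrow> K i = N"
proof -
  assume "e \<le> i"
  then have "{j \<in> S. j \<le> i} = S" using e_ge by fastforce
  then show ?thesis using K_S[of i] N_S by (simp only:)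
qed

lemma r_sum: "sum_list r = N"
proof -
  have "sum_list r = sum f {t..e}" unfolding r_def by (rule sum_list_upto)
  also have "\<dots> = K e" using K_interval[OF te] by simp
  also have "\<dots> = N" using K_high by simp
  finally show ?thesis .
qed

lemma r_partial: "0 \<le> x \<Longrightarrow> x < e - t \<Longrightarrow> partial_R r x = K (t + x)"
proof -
  assume x: "0 \<le> x" "x < e - t"
  have sp: "[t..e] = [t..t + x] @ [t + x + 1..e]" using x by (intro upto_split2) auto
  have "take (nat x + 1) [t..e] = [t..t + x]"
    by (subst sp) (use x in simp)
  then have "partial_R r x = sum_list (map f [t..t + x])"
    unfolding partial_R_def r_def by (simp add: take_map)
  also have "\<dots> = sum f {t..t + x}" by (rule sum_list_upto)
  also have "\<dots> = K (t + x)" using K_interval[of "t + x"] x by simp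
  finally show ?thesis .
qed

lemma shift_eq: "shift_rep (- t) (u_tuple r :: 'a zrep) =
   \<lparr>dim = (\<lambda>i. N), upm = (\<lambda>i. diag_prefix N (K i)), downm = (\<lambda>i. diag_suffix N (K i))\<rparr>"
proof -
  have up: "upm (u_tuple r :: 'a zrep) (- t + i) = diag_prefix N (K i)" for i
  proof -
    consider "- t + i < 0" | "e - t \<le> - t + i" | "0 \<le> - t + i \<and> - t + i < e - t" by linarith
    then show ?thesis
    proof cases
      case 1
      then show ?thesis unfolding u_tuple_def Let_def using r_len r_sum K_low[of i] by (simp add: diag_prefix_0)
    next
      case 2
      then show ?thesis unfolding u_tuple_def Let_def using r_len r_sum K_high[of i] te by (simp add: diag_prefix_n)
    next
      case 3
      then show ?thesis unfolding u_tuple_def Let_def using r_len r_sum r_partial[of "- t + i"] by simp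
    qed
  qed
  have down: "downm (u_tuple r :: 'a zrep) (- t + i) = diag_suffix N (K i)" for i
  proof -
    consider "- t + i < 0" | "e - t \<le> - t + i" | "0 \<le> - t + i \<and> - t + i < e - t" by linarith
    then show ?thesis
    proof cases
      case 1
      then show ?thesis unfolding u_tuple_def Let_def using r_len r_sum K_low[of i] te by (simp add: diag_suffix_0)
    next
      case 2
      then show ?thesis unfolding u_tuple_def Let_def using r_len r_sum K_high[of i] by (simp add: diag_suffix_n)
    next
      case 3
      then show ?thesis unfolding u_tuple_def Let_def using r_len r_sum r_partial[of "- t + i"] by simp
    qed
  qed
  have d: "dim (u_tuple r :: 'a zrep) (- t + i) = N" for i unfolding u_tuple_def Let_def using r_sum by simp
  show ?thesis unfolding shift_rep_def using up down d by (simp add: fun_eq_iff)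
qed

lemma existence: "valid_tuple r \<and> equivalent_rep u (u_tuple r)"
  using r_valid iso_target shift_eq unfolding equivalent_rep_def by metis

end

lemma image_mult_sub:
  assumes "A \<in> carrier_mat a b" "B \<in> carrier_mat b c"
  shows "image_of (A * B) \<subseteq> image_of (A :: 'a::field mat)"
proof
  fix w assume "w \<in> image_of (A * B)"
  then obtain z where z: "z \<in> carrier_vec c" "w = (A * B) *\<^sub>v z" unfolding image_of_def using assms by auto
  then have "w = A *\<^sub>v (B *\<^sub>v z)" using assms by simp
  then show "w \<in> image_of A" unfolding image_of_def using assms z by auto
qed

lemma get_bounds:
  fixes u :: "'a::field zrep"
  assumes "linked_chain u" "finite_support u"
  shows "\<exists>lo hi. (\<forall>i. i < lo \<longrightarrow> carrier_vec (dim u i) \<subseteq> image_of (downm u i)) \<and>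
                 (\<forall>i. hi \<le> i \<longrightarrow> carrier_vec (dim u (i+1)) \<subseteq> image_of (upm u i))"
proof -
  have wf: "well_formed u" using assms(1) unfolding linked_chain_def by auto
  from assms(2) obtain H :: "int set" where H: "finite H" "\<And>i. \<exists>j\<in>H. surjective_mat (path_map u j i) (dim u i)"
    unfolding finite_support_def by blast
  have Hne: "H \<noteq> {}" using H(2)[of 0] by auto
  define lo where "lo = Min H"
  define hi where "hi = Max H"
  have lo: "\<forall>i. i < lo \<longrightarrow> carrier_vec (dim u i) \<subseteq> image_of (downm u i)"
  proof (intro allI impI)
    fix i assume i: "i < lo"
    obtain j where j: "j \<in> H" "surjective_mat (path_map u j i) (dim u i)" using H(2) by blast
    have "lo \<le> j" unfolding lo_def using H(1) j(1) by simp
    then have "i < j" using i by simp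
    then have "path_map u j i = downm u i * path_map u j (i + 1)" by (rule path_down)
    moreover have "image_of (downm u i * path_map u j (i + 1)) \<subseteq> image_of (downm u i)"
      by (rule image_mult_sub[of _ "dim u i" "dim u (i + 1)" _ "dim u j"])
        (use wf path_carrier[OF wf] in \<open>auto simp: well_formed_def\<close>)
    ultimately show "carrier_vec (dim u i) \<subseteq> image_of (downm u i)"
      using j(2) unfolding surjective_mat_def by auto
  qed
  have hi: "\<forall>i. hi \<le> i \<longrightarrow> carrier_vec (dim u (i+1)) \<subseteq> image_of (upm u i)"
  proof (intro allI impI)
    fix i assume i: "hi \<le> i"
    obtain j where j: "j \<in> H" "surjective_mat (path_map u j (i + 1)) (dim u (i + 1))" using H(2) by blast
    have "j \<le> hi" unfolding hi_def using H(1) j(1) by simp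
    then have "j \<le> i" using i by simp
    then have "path_map u j (i + 1) = upm u i * path_map u j i" by (rule path_up)
    moreover have "image_of (upm u i * path_map u j i) \<subseteq> image_of (upm u i)"
      by (rule image_mult_sub[of _ "dim u (i + 1)" "dim u i" _ "dim u j"])
        (use wf path_carrier[OF wf] in \<open>auto simp: well_formed_def\<close>)
    ultimately show "carrier_vec (dim u (i + 1)) \<subseteq> image_of (upm u i)"
      using j(2) unfolding surjective_mat_def by auto
  qed
  show ?thesis using lo hi by blast
qed

lemma dp_vec:
  assumes "v \<in> carrier_vec n" "p < n"
  shows "(diag_prefix n a *\<^sub>v v) $ p = (if p < a then v $ p else (0::'a::field))"
proof -
  have "(diag_prefix n a *\<^sub>v v) $ p = (\<Sum>q = 0..<n. (if p = q \<and> p < a then 1 else 0) * v $ q)"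
    using assms unfolding diag_prefix_def by (simp add: scalar_prod_def)
  also have "\<dots> = (\<Sum>q = 0..<n. if q = p then (if p < a then v $ p else 0) else 0)"
    by (rule sum.cong) auto
  also have "\<dots> = (if p < a then v $ p else 0)" using assms by simp
  finally show ?thesis .
qed

definition emb_mat :: "nat \<Rightarrow> nat \<Rightarrow> 'a::field mat" where
  "emb_mat n a = mat n (n - a) (\<lambda>(p, q). if p = q + a then 1 else 0)"

definition proj_mat :: "nat \<Rightarrow> nat \<Rightarrow> 'a::field mat" where
  "proj_mat n b = mat (n - b) n (\<lambda>(p, q). if q = p + b then 1 else 0)"

lemma emb_vec:
  assumes "x \<in> carrier_vec (n - a)" "p < n"
  shows "(emb_mat n a *\<^sub>v x) $ p = (if a \<le> p then x $ (p - a) else (0::'a::field))"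
proof -
  have "(emb_mat n a *\<^sub>v x) $ p = (\<Sum>q = 0..<n - a. (if p = q + a then 1 else 0) * x $ q)"
    using assms unfolding emb_mat_def by (simp add: scalar_prod_def)
  also have "\<dots> = (\<Sum>q = 0..<n - a. if q = p - a then (if a \<le> p then x $ q else 0) else 0)"
    by (rule sum.cong) auto
  also have "\<dots> = (if a \<le> p then x $ (p - a) else 0)" using assms by auto
  finally show ?thesis .
qed

lemma proj_vec:
  assumes "w \<in> carrier_vec n" "p < n - b"
  shows "(proj_mat n b *\<^sub>v w) $ p = (w $ (p + b) :: 'a::field)"
proof -
  have "(proj_mat n b *\<^sub>v w) $ p = (\<Sum>q = 0..<n. (if q = p + b then 1 else 0) * w $ q)"
    using assms unfolding proj_mat_def by (simp add: scalar_prod_def)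
  also have "\<dots> = (\<Sum>q = 0..<n. if q = p + b then w $ (p + b) else 0)"
    by (rule sum.cong) auto
  also have "\<dots> = w $ (p + b)" using assms by auto
  finally show ?thesis .
qed

lemma diag_cmp:
  fixes Y :: "'a::field mat"
  assumes ab: "a \<le> n" "b \<le> n" and Y: "Y \<in> carrier_mat n n" "Yi \<in> carrier_mat n n" "Y * Yi = 1\<^sub>m n"
    and H: "\<And>v. v \<in> carrier_vec n \<Longrightarrow> (diag_prefix n a :: 'a mat) *\<^sub>v (Y *\<^sub>v v) = 0\<^sub>v n \<Longrightarrow>
      (diag_prefix n b :: 'a mat) *\<^sub>v v = 0\<^sub>v n"
  shows "b \<le> a"
proof -
  define E :: "'a mat" where "E = emb_mat n a"
  define Pr :: "'a mat" where "Pr = proj_mat n b"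
  have Ec: "E \<in> carrier_mat n (n - a)" unfolding E_def emb_mat_def by simp
  have Prc: "Pr \<in> carrier_mat (n - b) n" unfolding Pr_def proj_mat_def by simp
  define M where "M = Pr * (Yi * E)"
  have Mc: "M \<in> carrier_mat (n - b) (n - a)" unfolding M_def using Ec Prc Y by simp
  have inj: "x = 0\<^sub>v (n - a)" if x: "x \<in> carrier_vec (n - a)" and z: "M *\<^sub>v x = 0\<^sub>v (n - b)" for x
  proof -
    define zz where "zz = E *\<^sub>v x"
    have zc: "zz \<in> carrier_vec n" unfolding zz_def using Ec x by simp
    have zi: "zz $ p = (if a \<le> p then x $ (p - a) else 0)" if "p < n" for p
      unfolding zz_def E_def using emb_vec[OF x that] .
    have Dz: "diag_prefix n a *\<^sub>v zz = 0\<^sub>v n"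
    proof (rule eq_vecI)
      fix p assume "p < dim_vec (0\<^sub>v n :: 'a vec)" then have p: "p < n" by simp
      show "(diag_prefix n a *\<^sub>v zz) $ p = 0\<^sub>v n $ p" using dp_vec[OF zc p] zi[OF p] p by simp
    qed (simp add: diag_prefix_def)
    define w where "w = Yi *\<^sub>v zz"
    have wc: "w \<in> carrier_vec n" unfolding w_def using Y zc by simp
    have Yw: "Y *\<^sub>v w = zz" unfolding w_def using Y zc by (simp add: assoc_mult_mat_vec[symmetric])
    have Dw: "diag_prefix n b *\<^sub>v w = 0\<^sub>v n" using H[OF wc] Yw Dz by simp
    have "M *\<^sub>v x = Pr *\<^sub>v ((Yi * E) *\<^sub>v x)" unfolding M_def
      by (rule assoc_mult_mat_vec[OF Prc _ x]) (use Y Ec in simp)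
    also have "(Yi * E) *\<^sub>v x = Yi *\<^sub>v (E *\<^sub>v x)" by (rule assoc_mult_mat_vec[OF Y(2) Ec x])
    finally have Mx: "M *\<^sub>v x = Pr *\<^sub>v w" unfolding w_def zz_def .
    have w0: "w = 0\<^sub>v n"
    proof (rule eq_vecI)
      fix p assume "p < dim_vec (0\<^sub>v n :: 'a vec)" then have p: "p < n" by simp
      show "w $ p = 0\<^sub>v n $ p"
      proof (cases "p < b")
        case True
        have "(diag_prefix n b *\<^sub>v w) $ p = 0" using Dw p by simp
        then show ?thesis using dp_vec[OF wc p, of b] True p by simp
      next
        case False
        have "Pr *\<^sub>v w = 0\<^sub>v (n - b)" using Mx z by simp
        then have "(Pr *\<^sub>v w) $ (p - b) = 0\<^sub>v (n - b) $ (p - b)" by simp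
        then have "(Pr *\<^sub>v w) $ (p - b) = 0" using p False by simp
        moreover have "(Pr *\<^sub>v w) $ (p - b) = w $ (p - b + b)" unfolding Pr_def
          by (rule proj_vec[OF wc]) (use p False in simp)
        ultimately show ?thesis using False p by simp
      qed
    qed (use wc in simp)
    have "zz = 0\<^sub>v n" using Yw w0 Y by simp
    show ?thesis
    proof (rule eq_vecI)
      fix q assume "q < dim_vec (0\<^sub>v (n - a) :: 'a vec)" then have q: "q < n - a" by simp
      have "zz $ (q + a) = x $ q" using zi[of "q + a"] q by simp
      then show "x $ q = 0\<^sub>v (n - a) $ q" using \<open>zz = 0\<^sub>v n\<close> q by simp
    qed (use x in simp)
  qed
  have "n - a \<le> n - b" by (rule inj_le[OF Mc inj])
  then show ?thesis using ab by simp
qed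

lemma iso_dims:
  fixes u :: "'a::field zrep"
  assumes "iso_rep u v"
  shows "dim v i = dim u i"
proof -
  from assms obtain P :: "int \<Rightarrow> 'a mat" where "\<forall>i. P i \<in> carrier_mat (dim v i) (dim u i) \<and> invertible_mat (P i)"
    unfolding iso_rep_def by blast
  then have "P i \<in> carrier_mat (dim v i) (dim u i)" "invertible_mat (P i)" by auto
  then show ?thesis unfolding invertible_mat_def square_mat.simps carrier_mat_def by simp
qed

lemma iso_diag:
  fixes u :: "'a::field zrep"
  assumes wf: "well_formed u" and i1: "iso_rep u v1" and i2: "iso_rep u v2"
    and d1: "upm v1 i = diag_prefix n a" and d2: "upm v2 i = diag_prefix n b"
    and n: "dim u i = n" "dim u (i + 1) = n" and ab: "a \<le> n" "b \<le> n"
  shows "b \<le> a"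
proof -
  from i1 obtain P1 :: "int \<Rightarrow> 'a mat" where P1: "\<And>i. P1 i \<in> carrier_mat (dim v1 i) (dim u i)" "\<And>i. invertible_mat (P1 i)"
    "\<And>i. P1 (i+1) * upm u i = upm v1 i * P1 i"
    unfolding iso_rep_def by blast
  from i2 obtain P2 :: "int \<Rightarrow> 'a mat" where P2: "\<And>i. P2 i \<in> carrier_mat (dim v2 i) (dim u i)" "\<And>i. invertible_mat (P2 i)"
    "\<And>i. P2 (i+1) * upm u i = upm v2 i * P2 i"
    unfolding iso_rep_def by blast
  have c1: "P1 i \<in> carrier_mat n n" "P1 (i + 1) \<in> carrier_mat n n"
    using P1(1)[of i] P1(1)[of "i+1"] iso_dims[OF i1, of i] iso_dims[OF i1, of "i+1"] n by auto
  have c2: "P2 i \<in> carrier_mat n n" "P2 (i + 1) \<in> carrier_mat n n"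
    using P2(1)[of i] P2(1)[of "i+1"] iso_dims[OF i2, of i] iso_dims[OF i2, of "i+1"] n by auto
  have Fc: "upm u i \<in> carrier_mat n n" using wf n unfolding well_formed_def by metis
  obtain Q1 where Q1: "Q1 \<in> carrier_mat n n" "Q1 * P1 (i + 1) = 1\<^sub>m n" "P1 (i + 1) * Q1 = 1\<^sub>m n"
    using inv_exists[OF P1(2) c1(2)] by blast
  obtain Q1' where Q1': "Q1' \<in> carrier_mat n n" "Q1' * P1 i = 1\<^sub>m n" "P1 i * Q1' = 1\<^sub>m n"
    using inv_exists[OF P1(2) c1(1)] by blast
  obtain Q2 where Q2: "Q2 \<in> carrier_mat n n" "Q2 * P2 i = 1\<^sub>m n" "P2 i * Q2 = 1\<^sub>m n"
    using inv_exists[OF P2(2) c2(1)] by blast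
  define Y where "Y = P1 i * Q2"
  define Yi where "Yi = P2 i * Q1'"
  have Yc: "Y \<in> carrier_mat n n" "Yi \<in> carrier_mat n n" unfolding Y_def Yi_def using c1 c2 Q2 Q1' by auto
  have YYi: "Y * Yi = 1\<^sub>m n"
  proof -
    have "Y * Yi = P1 i * (Q2 * (P2 i * Q1'))" unfolding Y_def Yi_def using c1 c2 Q2 Q1'
      by (simp add: assoc_mult_mat[of _ n n _ n _ n])
    also have "Q2 * (P2 i * Q1') = (Q2 * P2 i) * Q1'"
      using assoc_mult_mat[of Q2 n n "P2 i" n Q1' n] c2 Q2 Q1' by simp
    also have "\<dots> = Q1'" using Q2 Q1' by simp
    finally show ?thesis using Q1' by simp
  qed
  have D1c: "diag_prefix n a \<in> carrier_mat n n" by simp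
  have D2c: "diag_prefix n b \<in> carrier_mat n n" by simp
  have e1: "P1 (i + 1) * upm u i = diag_prefix n a * P1 i" using P1(3) d1 by simp
  have e2: "P2 (i + 1) * upm u i = diag_prefix n b * P2 i" using P2(3) d2 by simp
  show ?thesis
  proof (rule diag_cmp[OF ab Yc YYi])
    fix v :: "'a vec" assume v: "v \<in> carrier_vec n" and z: "diag_prefix n a *\<^sub>v (Y *\<^sub>v v) = 0\<^sub>v n"
    define w where "w = Q2 *\<^sub>v v"
    have wc: "w \<in> carrier_vec n" unfolding w_def using Q2 v by simp
    have vw: "P2 i *\<^sub>v w = v" unfolding w_def using Q2 c2 v by (simp add: assoc_mult_mat_vec[symmetric])
    have Yv: "Y *\<^sub>v v = P1 i *\<^sub>v w" unfolding Y_def w_def using c1 Q2 v by simp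
    have Fwc: "upm u i *\<^sub>v w \<in> carrier_vec n" using Fc wc by simp
    have s1: "upm u i *\<^sub>v w = Q1 *\<^sub>v (P1 (i + 1) *\<^sub>v (upm u i *\<^sub>v w))"
      using assoc_mult_mat_vec[of Q1 n n "P1 (i + 1)" n "upm u i *\<^sub>v w"] Q1 c1 Fwc by simp
    have s2: "P1 (i + 1) *\<^sub>v (upm u i *\<^sub>v w) = diag_prefix n a *\<^sub>v (P1 i *\<^sub>v w)"
      using assoc_mult_mat_vec[of "P1 (i + 1)" n n "upm u i" n w]
        assoc_mult_mat_vec[of "diag_prefix n a" n n "P1 i" n w] e1 c1 Fc wc by simp
    have Fw: "upm u i *\<^sub>v w = 0\<^sub>v n" using s1 s2 z Yv Q1 by simp
    have "diag_prefix n b *\<^sub>v v = diag_prefix n b *\<^sub>v (P2 i *\<^sub>v w)" using vw by simp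
    also have "\<dots> = P2 (i + 1) *\<^sub>v (upm u i *\<^sub>v w)"
      using assoc_mult_mat_vec[of "P2 (i + 1)" n n "upm u i" n w]
        assoc_mult_mat_vec[of "diag_prefix n b" n n "P2 i" n w] e2 c2 Fc wc by simp
    also have "\<dots> = 0\<^sub>v n" using Fw c2 by simp
    finally show "diag_prefix n b *\<^sub>v v = 0\<^sub>v n" .
  qed
qed

lemma sum_take_drop: "sum_list (r :: nat list) = sum_list (take k r) + sum_list (drop k r)"
  by (metis append_take_drop_id sum_list_append)

definition ar :: "nat list \<Rightarrow> int \<Rightarrow> nat" where
  "ar r j = (if j < 0 then 0 else if int (length r) - 1 \<le> j then sum_list r else partial_R r j)"

lemma ut_upm: "upm (u_tuple r :: 'a::field zrep) j = diag_prefix (sum_list r) (ar r j)"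
  unfolding u_tuple_def Let_def ar_def by (simp add: diag_prefix_0 diag_prefix_n)

lemma ut_dim: "dim (u_tuple r :: 'a::field zrep) j = sum_list r"
  unfolding u_tuple_def Let_def by simp

lemma take_le: "sum_list (take k r) \<le> sum_list (r :: nat list)"
proof -
  have "sum_list r = sum_list (take k r) + sum_list (drop k r)" by (rule sum_take_drop)
  then show ?thesis by linarith
qed

lemma ar_le: "ar r j \<le> sum_list r"
  unfolding ar_def partial_R_def using take_le[of "nat j + 1" r] by simp

lemma take_pos: "valid_tuple r \<Longrightarrow> 0 < sum_list (take (Suc k) r)"
  unfolding valid_tuple_def by (cases r) auto

lemma ar_zero: "valid_tuple r \<Longrightarrow> ar r j = 0 \<longleftrightarrow> j < 0"
proof -
  assume v: "valid_tuple r"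
  have "0 < sum_list r" using take_pos[OF v, of 0] take_le[of 1 r] by simp
  moreover have "0 < partial_R r j" unfolding partial_R_def using take_pos[OF v] by simp
  ultimately show ?thesis unfolding ar_def by auto
qed

lemma ar_full: "valid_tuple r \<Longrightarrow> 0 \<le> j \<Longrightarrow> ar r j = sum_list r \<longleftrightarrow> int (length r) - 1 \<le> j"
proof -
  assume v: "valid_tuple r" and j: "0 \<le> j"
  have "partial_R r j < sum_list r" if jd: "j < int (length r) - 1"
  proof -
    define k where "k = nat j + 1"
    have k: "k < length r" using jd j unfolding k_def by simp
    have "last r \<in> set (drop k r)"
    proof -
      have "r \<noteq> []" using k by auto
      then have "last r = r ! (length r - 1)" by (simp add: last_conv_nth)
      moreover have "drop k r ! (length r - 1 - k) = r ! (length r - 1)" using k by simp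
      moreover have "drop k r ! (length r - 1 - k) \<in> set (drop k r)" using k by (intro nth_mem) simp
      ultimately show ?thesis by simp
    qed
    then have "last r \<le> sum_list (drop k r)" by (rule member_le_sum_list) simp
    moreover have "last r > 0" using v unfolding valid_tuple_def by simp
    ultimately have "0 < sum_list (drop k r)" by simp
    moreover have "sum_list r = sum_list (take k r) + sum_list (drop k r)" by (rule sum_take_drop)
    ultimately show ?thesis unfolding partial_R_def k_def[symmetric] by linarith
  qed
  then show ?thesis unfolding ar_def using j by auto
qed

lemma list_from_sums:
  assumes "length xs = length ys" "\<And>k. k \<le> length xs \<Longrightarrow> sum_list (take k xs) = sum_list (take k (ys :: nat list))"
  shows "xs = ys"
proof (rule nth_equalityI)
  show "length xs = length ys" by (rule assms(1))
  fix k assume k: "k < length xs"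
  have "sum_list (take (Suc k) xs) = sum_list (take k xs) + xs ! k" using k by (simp add: take_Suc_conv_app_nth)
  moreover have "sum_list (take (Suc k) ys) = sum_list (take k ys) + ys ! k" using k assms(1) by (simp add: take_Suc_conv_app_nth)
  ultimately show "xs ! k = ys ! k" using assms(2)[of k] assms(2)[of "Suc k"] k by simp
qed

lemma uniq:
  fixes u :: "'a::field zrep"
  assumes wf: "well_formed u" and v1: "valid_tuple r1" and v2: "valid_tuple r2"
    and e1: "equivalent_rep u (u_tuple r1)" and e2: "equivalent_rep u (u_tuple r2)"
  shows "r1 = r2"
proof -
  obtain t1 where i1: "iso_rep u (shift_rep t1 (u_tuple r1 :: 'a zrep))" using e1 unfolding equivalent_rep_def by blast
  obtain t2 where i2: "iso_rep u (shift_rep t2 (u_tuple r2 :: 'a zrep))" using e2 unfolding equivalent_rep_def by blast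
  define n where "n = sum_list r1"
  have du1: "dim u i = n" for i using iso_dims[OF i1, of i] unfolding shift_rep_def n_def by (simp add: ut_dim)
  have n2: "sum_list r2 = n" using iso_dims[OF i2, of 0] du1[of 0] unfolding shift_rep_def by (simp add: ut_dim)
  have up1: "upm (shift_rep t1 (u_tuple r1 :: 'a zrep)) i = diag_prefix n (ar r1 (t1 + i))" for i
    unfolding shift_rep_def n_def by (simp add: ut_upm)
  have up2: "upm (shift_rep t2 (u_tuple r2 :: 'a zrep)) i = diag_prefix n (ar r2 (t2 + i))" for i
    unfolding shift_rep_def using n2 by (simp add: ut_upm)
  have le1: "ar r1 j \<le> n" for j using ar_le[of r1 j] n_def by simp
  have le2: "ar r2 j \<le> n" for j using ar_le[of r2 j] n2 by simp
  have key: "ar r1 (t1 + i) = ar r2 (t2 + i)" for i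
  proof -
    have "ar r2 (t2 + i) \<le> ar r1 (t1 + i)"
      by (rule iso_diag[OF wf i1 i2 up1 up2 du1 du1 le1 le2])
    moreover have "ar r1 (t1 + i) \<le> ar r2 (t2 + i)"
      by (rule iso_diag[OF wf i2 i1 up2 up1 du1 du1 le2 le1])
    ultimately show ?thesis by simp
  qed
  have tt: "t1 = t2"
  proof (rule ccontr)
    assume "t1 \<noteq> t2"
    then consider "t1 < t2" | "t2 < t1" by linarith
    then show False
    proof cases
      case 1
      have "ar r1 (t1 + - t2) = 0" using ar_zero[OF v1] 1 by simp
      moreover have "ar r2 (t2 + - t2) \<noteq> 0" using ar_zero[OF v2] by simp
      ultimately show False using key[of "- t2"] by simp
    next
      case 2
      have "ar r2 (t2 + - t1) = 0" using ar_zero[OF v2] 2 by simp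
      moreover have "ar r1 (t1 + - t1) \<noteq> 0" using ar_zero[OF v1] by simp
      ultimately show False using key[of "- t1"] by simp
    qed
  qed
  have eq: "ar r1 j = ar r2 j" for j using key[of "j - t1"] tt by simp
  have ne: "r1 \<noteq> []" "r2 \<noteq> []" using v1 v2 unfolding valid_tuple_def by auto
  define d1 where "d1 = int (length r1) - 1"
  define d2 where "d2 = int (length r2) - 1"
  have d0: "0 \<le> d1" "0 \<le> d2" using ne unfolding d1_def d2_def by (auto simp: Suc_le_eq)
  have "ar r1 d1 = n" unfolding ar_def d1_def n_def using d0 d1_def by simp
  then have "ar r2 d1 = sum_list r2" using eq n2 by simp
  then have "d2 \<le> d1" using ar_full[OF v2 d0(1)] d2_def by simp
  moreover have "ar r2 d2 = n" unfolding ar_def d2_def using d0 d2_def n2 by simp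
  then have "ar r1 d2 = sum_list r1" using eq n_def by simp
  then have "d1 \<le> d2" using ar_full[OF v1 d0(2)] d1_def by simp
  ultimately have len: "length r1 = length r2" unfolding d1_def d2_def by simp
  show ?thesis
  proof (rule list_from_sums[OF len])
    fix k assume k: "k \<le> length r1"
    show "sum_list (take k r1) = sum_list (take k r2)"
    proof (cases "k = 0 \<or> k = length r1")
      case True
      then show ?thesis using len n2 n_def by auto
    next
      case False
      define j where "j = int k - 1"
      have j: "0 \<le> j" "j < int (length r1) - 1" "j < int (length r2) - 1" using False k len unfolding j_def by auto
      have "nat j + 1 = k" using False unfolding j_def by auto
      then have "ar r1 j = sum_list (take k r1)" "ar r2 j = sum_list (take k r2)"
        unfolding ar_def partial_R_def using j by auto
      then show ?thesis using eq by simp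
    qed
  qed
qed

theorem proposition3p2:
  fixes u :: "'a::field zrep"
  assumes "linked_chain u" and "exact_rep u" and "nontrivial_rep u" and "finite_support u"
  shows "\<exists>!r. valid_tuple r \<and> equivalent_rep u (u_tuple r)"
proof -
  obtain lo hi where b: "\<forall>i. i < lo \<longrightarrow> carrier_vec (dim u i) \<subseteq> image_of (downm u i)"
    "\<forall>i. hi \<le> i \<longrightarrow> carrier_vec (dim u (i+1)) \<subseteq> image_of (upm u i)"
    using get_bounds[OF assms(1) assms(4)] by blast
  interpret lchain_nt u lo hi
    by unfold_locales (use assms b in \<open>auto simp: nontrivial_rep_def\<close>)
  have wf: "well_formed u" using assms(1) unfolding linked_chain_def by auto
  have ex: "\<exists>r. valid_tuple r \<and> equivalent_rep u (u_tuple r)" using existence by blast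
  show ?thesis using ex uniq[OF wf] by blast
qed

end
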